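(* Let $(\mathcal{C},d,\eta)$ be a symmetric monoidal anti-involutive category which has duals, and let $(\cdot)^*\colon\mathcal{C}\to\mathcal{C}^{\mathrm{op}}$ be a choice of dual functor. Then the canonical monoidal natural isomorphism $d\circ(\cdot)^*\Rightarrow(\cdot)^*\circ d$ (given by uniqueness of duals) makes $(\cdot)^*$ into an anti-involutive functor $(\mathcal{C},d,\eta)\to(\mathcal{C}^{\mathrm{op}},d,\eta^{-1})$.
   Context: A symmetric monoidal anti-involutive category: a symmetric monoidal category $\mathcal{C}$ with a symmetric monoidal functor $d\colon\mathcal{C}\to\mathcal{C}^{\mathrm{op}}$ and a monoidal natural isomorphism $\eta\colon\mathrm{id}\Rightarrow d^2$ with $d(\eta_x)\circ\eta_{dx}=\mathrm{id}_{dx}$. $\mathcal{C}^{\mathrm{op}}$ carries the anti-involution $d$ with $\eta$ inverted. An anti-involutive functor $(F,\phi)\colon(\mathcal{C}_1,d_1,\eta_1)\to(\mathcal{C}_2,d_2,\eta_2)$ is a functor with a natural isomorphism $\phi\colon F\circ d_1\Rightarrow d_2\circ F$ such that $\phi_{d_1x}\circ F((\eta_1)_x)=d_2(\phi_x)\circ(\eta_2)_{F(x)}$. A dual functor is obtained by choosing for each $x$ a dual $(x^*,\mathrm{ev}_x\colon x^*\otimes x\to1,\mathrm{coev}_x\colon1\to x\otimes x^* )$; $f^*$ is the unique morphism with $\mathrm{ev}_x\circ(f^*\otimes\mathrm{id})=\mathrm{ev}_y\circ(\mathrm{id}\otimes f)$ for $f\colon x\to y$, and the monoidal structure uses the braiding.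 Since the symmetric monoidal functor $d$ carries duality data to duality data, $d(x^* )$ and $(dx)^*$ are both duals of $dx$; the canonical isomorphism between them compatible with evaluations and coevaluations is the uniqueness-of-duals isomorphism. *)

theory Defs
  imports Main
begin

record ('o, 'm) mcat =
  mc_obj   :: "'o set"
  mc_arr   :: "'m set"
  mc_dom   :: "'m \<Rightarrow> 'o"
  mc_cod   :: "'m \<Rightarrow> 'o"
  mc_cmp   :: "'m \<Rightarrow> 'm \<Rightarrow> 'm"   (* mc_cmp g f = g \<circ> f *)
  mc_id    :: "'o \<Rightarrow> 'm"
  mc_tens  :: "'o \<Rightarrow> 'o \<Rightarrow> 'o"
  mc_tensm :: "'m \<Rightarrow> 'm \<Rightarrow> 'm"
  mc_unit  :: "'o"
  mc_assoc :: "'o \<Rightarrow> 'o \<Rightarrow> 'o \<Rightarrow> 'm"  (* (a\<otimes>b)\<otimes>c \<rightarrow> a\<otimes>(b\<otimes>c) *)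
  mc_lunit :: "'o \<Rightarrow> 'm"              (* 1\<otimes>a \<rightarrow> a *)
  mc_runit :: "'o \<Rightarrow> 'm"              (* a\<otimes>1 \<rightarrow> a *)
  mc_braid :: "'o \<Rightarrow> 'o \<Rightarrow> 'm"        (* a\<otimes>b \<rightarrow> b\<otimes>a *)

definition mc_hom :: "('o, 'm, 'x) mcat_scheme \<Rightarrow> 'o \<Rightarrow> 'o \<Rightarrow> 'm set" where
  "mc_hom C a b = {f \<in> mc_arr C. mc_dom C f = a \<and> mc_cod C f = b}"

definition is_category :: "('o, 'm, 'x) mcat_scheme \<Rightarrow> bool" where
  "is_category C \<longleftrightarrow>
     (\<forall>f \<in> mc_arr C. mc_dom C f \<in> mc_obj C \<and> mc_cod C f \<in> mc_obj C) \<and>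
     (\<forall>a \<in> mc_obj C. mc_id C a \<in> mc_hom C a a) \<and>
     (\<forall>f \<in> mc_arr C. \<forall>g \<in> mc_arr C. mc_dom C g = mc_cod C f \<longrightarrow>
        mc_cmp C g f \<in> mc_hom C (mc_dom C f) (mc_cod C g)) \<and>
     (\<forall>f \<in> mc_arr C. mc_cmp C f (mc_id C (mc_dom C f)) = f \<and> mc_cmp C (mc_id C (mc_cod C f)) f = f) \<and>
     (\<forall>f \<in> mc_arr C. \<forall>g \<in> mc_arr C. \<forall>h \<in> mc_arr C.
        mc_dom C g = mc_cod C f \<longrightarrow> mc_dom C h = mc_cod C g \<longrightarrow>
        mc_cmp C h (mc_cmp C g f) = mc_cmp C (mc_cmp C h g) f)"

definition mc_iso :: "('o, 'm, 'x) mcat_scheme \<Rightarrow> 'm \<Rightarrow> bool" where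
  "mc_iso C f \<longleftrightarrow> f \<in> mc_arr C \<and>
     (\<exists>g \<in> mc_hom C (mc_cod C f) (mc_dom C f).
        mc_cmp C g f = mc_id C (mc_dom C f) \<and> mc_cmp C f g = mc_id C (mc_cod C f))"

definition mc_inv :: "('o, 'm, 'x) mcat_scheme \<Rightarrow> 'm \<Rightarrow> 'm" where
  "mc_inv C f = (THE g. g \<in> mc_hom C (mc_cod C f) (mc_dom C f) \<and>
        mc_cmp C g f = mc_id C (mc_dom C f) \<and> mc_cmp C f g = mc_id C (mc_cod C f))"

definition monoidal_category :: "('o, 'm, 'x) mcat_scheme \<Rightarrow> bool" where
  "monoidal_category C \<longleftrightarrow> is_category C \<and>
     mc_unit C \<in> mc_obj C \<and>
     (\<forall>a \<in> mc_obj C. \<forall>b \<in> mc_obj C. mc_tens C a b \<in> mc_obj C) \<and>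
     (\<forall>f \<in> mc_arr C. \<forall>g \<in> mc_arr C. mc_tensm C f g \<in>
        mc_hom C (mc_tens C (mc_dom C f) (mc_dom C g)) (mc_tens C (mc_cod C f) (mc_cod C g))) \<and>
     (\<forall>a \<in> mc_obj C. \<forall>b \<in> mc_obj C. mc_tensm C (mc_id C a) (mc_id C b) = mc_id C (mc_tens C a b)) \<and>
     (\<forall>f \<in> mc_arr C. \<forall>g \<in> mc_arr C. \<forall>f' \<in> mc_arr C. \<forall>g' \<in> mc_arr C.
        mc_dom C g = mc_cod C f \<longrightarrow> mc_dom C g' = mc_cod C f' \<longrightarrow>
        mc_tensm C (mc_cmp C g f) (mc_cmp C g' f') = mc_cmp C (mc_tensm C g g') (mc_tensm C f f')) \<and>
     (\<forall>a \<in> mc_obj C. \<forall>b \<in> mc_obj C. \<forall>c \<in> mc_obj C.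
        mc_assoc C a b c \<in> mc_hom C (mc_tens C (mc_tens C a b) c) (mc_tens C a (mc_tens C b c)) \<and>
        mc_iso C (mc_assoc C a b c)) \<and>
     (\<forall>f \<in> mc_arr C. \<forall>g \<in> mc_arr C. \<forall>h \<in> mc_arr C.
        mc_cmp C (mc_assoc C (mc_cod C f) (mc_cod C g) (mc_cod C h)) (mc_tensm C (mc_tensm C f g) h) =
        mc_cmp C (mc_tensm C f (mc_tensm C g h)) (mc_assoc C (mc_dom C f) (mc_dom C g) (mc_dom C h))) \<and>
     (\<forall>a \<in> mc_obj C. mc_lunit C a \<in> mc_hom C (mc_tens C (mc_unit C) a) a \<and> mc_iso C (mc_lunit C a)) \<and>
     (\<forall>f \<in> mc_arr C. mc_cmp C (mc_lunit C (mc_cod C f)) (mc_tensm C (mc_id C (mc_unit C)) f) =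
        mc_cmp C f (mc_lunit C (mc_dom C f))) \<and>
     (\<forall>a \<in> mc_obj C. mc_runit C a \<in> mc_hom C (mc_tens C a (mc_unit C)) a \<and> mc_iso C (mc_runit C a)) \<and>
     (\<forall>f \<in> mc_arr C. mc_cmp C (mc_runit C (mc_cod C f)) (mc_tensm C f (mc_id C (mc_unit C))) =
        mc_cmp C f (mc_runit C (mc_dom C f))) \<and>
     (\<forall>a \<in> mc_obj C. \<forall>b \<in> mc_obj C. \<forall>c \<in> mc_obj C. \<forall>e \<in> mc_obj C.
        mc_cmp C (mc_assoc C a b (mc_tens C c e)) (mc_assoc C (mc_tens C a b) c e) =
        mc_cmp C (mc_tensm C (mc_id C a) (mc_assoc C b c e))
          (mc_cmp C (mc_assoc C a (mc_tens C b c) e) (mc_tensm C (mc_assoc C a b c) (mc_id C e)))) \<and>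
     (\<forall>a \<in> mc_obj C. \<forall>b \<in> mc_obj C.
        mc_cmp C (mc_tensm C (mc_id C a) (mc_lunit C b)) (mc_assoc C a (mc_unit C) b) =
        mc_tensm C (mc_runit C a) (mc_id C b))"

definition symmetric_monoidal_category :: "('o, 'm, 'x) mcat_scheme \<Rightarrow> bool" where
  "symmetric_monoidal_category C \<longleftrightarrow> monoidal_category C \<and>
     (\<forall>a \<in> mc_obj C. \<forall>b \<in> mc_obj C. mc_braid C a b \<in> mc_hom C (mc_tens C a b) (mc_tens C b a)) \<and>
     (\<forall>f \<in> mc_arr C. \<forall>g \<in> mc_arr C.
        mc_cmp C (mc_braid C (mc_cod C f) (mc_cod C g)) (mc_tensm C f g) =
        mc_cmp C (mc_tensm C g f) (mc_braid C (mc_dom C f) (mc_dom C g))) \<and>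
     (\<forall>a \<in> mc_obj C. \<forall>b \<in> mc_obj C.
        mc_cmp C (mc_braid C b a) (mc_braid C a b) = mc_id C (mc_tens C a b)) \<and>
     (\<forall>a \<in> mc_obj C. \<forall>b \<in> mc_obj C. \<forall>c \<in> mc_obj C.
        mc_cmp C (mc_assoc C b c a) (mc_cmp C (mc_braid C a (mc_tens C b c)) (mc_assoc C a b c)) =
        mc_cmp C (mc_tensm C (mc_id C b) (mc_braid C a c))
          (mc_cmp C (mc_assoc C b a c) (mc_tensm C (mc_braid C a b) (mc_id C c))))"

definition mc_op :: "('o, 'm, 'x) mcat_scheme \<Rightarrow> ('o, 'm, 'x) mcat_scheme" where
  "mc_op C = C\<lparr> mc_dom := mc_cod C, mc_cod := mc_dom C,
                mc_cmp := (\<lambda>g f. mc_cmp C f g),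
                mc_assoc := (\<lambda>a b c. mc_inv C (mc_assoc C a b c)),
                mc_lunit := (\<lambda>a. mc_inv C (mc_lunit C a)),
                mc_runit := (\<lambda>a. mc_inv C (mc_runit C a)),
                mc_braid := (\<lambda>a b. mc_braid C b a) \<rparr>"

definition mc_functor ::
  "('o, 'm, 'x) mcat_scheme \<Rightarrow> ('p, 'n, 'y) mcat_scheme \<Rightarrow> ('o \<Rightarrow> 'p) \<Rightarrow> ('m \<Rightarrow> 'n) \<Rightarrow> bool" where
  "mc_functor C D F0 F1 \<longleftrightarrow>
     (\<forall>a \<in> mc_obj C. F0 a \<in> mc_obj D) \<and>
     (\<forall>f \<in> mc_arr C. F1 f \<in> mc_hom D (F0 (mc_dom C f)) (F0 (mc_cod C f))) \<and>
     (\<forall>a \<in> mc_obj C. F1 (mc_id C a) = mc_id D (F0 a)) \<and>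
     (\<forall>f \<in> mc_arr C. \<forall>g \<in> mc_arr C. mc_dom C g = mc_cod C f \<longrightarrow>
        F1 (mc_cmp C g f) = mc_cmp D (F1 g) (F1 f))"

definition sym_monoidal_functor ::
  "('o, 'm, 'x) mcat_scheme \<Rightarrow> ('p, 'n, 'y) mcat_scheme \<Rightarrow> ('o \<Rightarrow> 'p) \<Rightarrow> ('m \<Rightarrow> 'n)
     \<Rightarrow> ('o \<Rightarrow> 'o \<Rightarrow> 'n) \<Rightarrow> 'n \<Rightarrow> bool" where
  "sym_monoidal_functor C D F0 F1 mu eps \<longleftrightarrow> mc_functor C D F0 F1 \<and>
     eps \<in> mc_hom D (mc_unit D) (F0 (mc_unit C)) \<and> mc_iso D eps \<and>
     (\<forall>a \<in> mc_obj C. \<forall>b \<in> mc_obj C.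
        mu a b \<in> mc_hom D (mc_tens D (F0 a) (F0 b)) (F0 (mc_tens C a b)) \<and> mc_iso D (mu a b)) \<and>
     (\<forall>f \<in> mc_arr C. \<forall>g \<in> mc_arr C.
        mc_cmp D (F1 (mc_tensm C f g)) (mu (mc_dom C f) (mc_dom C g)) =
        mc_cmp D (mu (mc_cod C f) (mc_cod C g)) (mc_tensm D (F1 f) (F1 g))) \<and>
     (\<forall>a \<in> mc_obj C. \<forall>b \<in> mc_obj C. \<forall>c \<in> mc_obj C.
        mc_cmp D (F1 (mc_assoc C a b c))
          (mc_cmp D (mu (mc_tens C a b) c) (mc_tensm D (mu a b) (mc_id D (F0 c)))) =
        mc_cmp D (mu a (mc_tens C b c))
          (mc_cmp D (mc_tensm D (mc_id D (F0 a)) (mu b c)) (mc_assoc D (F0 a) (F0 b) (F0 c)))) \<and>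
     (\<forall>a \<in> mc_obj C.
        mc_cmp D (F1 (mc_lunit C a)) (mc_cmp D (mu (mc_unit C) a) (mc_tensm D eps (mc_id D (F0 a))))
        = mc_lunit D (F0 a)) \<and>
     (\<forall>a \<in> mc_obj C.
        mc_cmp D (F1 (mc_runit C a)) (mc_cmp D (mu a (mc_unit C)) (mc_tensm D (mc_id D (F0 a)) eps))
        = mc_runit D (F0 a)) \<and>
     (\<forall>a \<in> mc_obj C. \<forall>b \<in> mc_obj C.
        mc_cmp D (F1 (mc_braid C a b)) (mu a b) = mc_cmp D (mu b a) (mc_braid D (F0 a) (F0 b)))"

text \<open>d = (d0, d1) : C \<rightarrow> C^op symmetric monoidal with structure maps dmu, deps (arrows of C^op);
  eta : id \<Rightarrow> d^2 a monoidal natural isomorphism, where d^2 = d^op \<circ> d carries the composite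
  monoidal structure (mu a b = d1 (dmu a b) \<circ> (dmu (d a) (d b))^-1, eps = d1 deps \<circ> deps^-1),
  and d(eta_x) \<circ> eta_(dx) = id.\<close>

definition anti_involutive_category ::
  "('o, 'm, 'x) mcat_scheme \<Rightarrow> ('o \<Rightarrow> 'o) \<Rightarrow> ('m \<Rightarrow> 'm) \<Rightarrow> ('o \<Rightarrow> 'o \<Rightarrow> 'm) \<Rightarrow> 'm
     \<Rightarrow> ('o \<Rightarrow> 'm) \<Rightarrow> bool" where
  "anti_involutive_category C d0 d1 dmu deps eta \<longleftrightarrow>
     symmetric_monoidal_category C \<and>
     sym_monoidal_functor C (mc_op C) d0 d1 dmu deps \<and>
     (\<forall>a \<in> mc_obj C. eta a \<in> mc_hom C a (d0 (d0 a)) \<and> mc_iso C (eta a)) \<and>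
     (\<forall>f \<in> mc_arr C. mc_cmp C (eta (mc_cod C f)) f = mc_cmp C (d1 (d1 f)) (eta (mc_dom C f))) \<and>
     (\<forall>a \<in> mc_obj C. \<forall>b \<in> mc_obj C.
        eta (mc_tens C a b) =
        mc_cmp C (mc_cmp C (d1 (dmu a b)) (mc_inv C (dmu (d0 a) (d0 b)))) (mc_tensm C (eta a) (eta b))) \<and>
     eta (mc_unit C) = mc_cmp C (d1 deps) (mc_inv C deps) \<and>
     (\<forall>a \<in> mc_obj C. mc_cmp C (d1 (eta a)) (eta (d0 a)) = mc_id C (d0 a))"

definition anti_involutive_functor ::
  "('o, 'm, 'x) mcat_scheme \<Rightarrow> ('o \<Rightarrow> 'o) \<Rightarrow> ('m \<Rightarrow> 'm) \<Rightarrow> ('o \<Rightarrow> 'm)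
   \<Rightarrow> ('p, 'n, 'y) mcat_scheme \<Rightarrow> ('p \<Rightarrow> 'p) \<Rightarrow> ('n \<Rightarrow> 'n) \<Rightarrow> ('p \<Rightarrow> 'n)
   \<Rightarrow> ('o \<Rightarrow> 'p) \<Rightarrow> ('m \<Rightarrow> 'n) \<Rightarrow> ('o \<Rightarrow> 'n) \<Rightarrow> bool" where
  "anti_involutive_functor C1 d01 d11 eta1 C2 d02 d12 eta2 F0 F1 phi \<longleftrightarrow>
     mc_functor C1 C2 F0 F1 \<and>
     (\<forall>a \<in> mc_obj C1. phi a \<in> mc_hom C2 (F0 (d01 a)) (d02 (F0 a)) \<and> mc_iso C2 (phi a)) \<and>
     (\<forall>f \<in> mc_arr C1. mc_cmp C2 (phi (mc_dom C1 f)) (F1 (d11 f)) =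
                       mc_cmp C2 (d12 (F1 f)) (phi (mc_cod C1 f))) \<and>
     (\<forall>a \<in> mc_obj C1. mc_cmp C2 (phi (d01 a)) (F1 (eta1 a)) = mc_cmp C2 (d12 (phi a)) (eta2 (F0 a)))"

definition dual_choice ::
  "('o, 'm, 'x) mcat_scheme \<Rightarrow> ('o \<Rightarrow> 'o) \<Rightarrow> ('o \<Rightarrow> 'm) \<Rightarrow> ('o \<Rightarrow> 'm) \<Rightarrow> bool" where
  "dual_choice C dual ev coev \<longleftrightarrow>
     (\<forall>a \<in> mc_obj C. dual a \<in> mc_obj C \<and>
        ev a \<in> mc_hom C (mc_tens C (dual a) a) (mc_unit C) \<and>
        coev a \<in> mc_hom C (mc_unit C) (mc_tens C a (dual a)) \<and>
        mc_cmp C (mc_runit C a) (mc_cmp C (mc_tensm C (mc_id C a) (ev a))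
          (mc_cmp C (mc_assoc C a (dual a) a)
            (mc_cmp C (mc_tensm C (coev a) (mc_id C a)) (mc_inv C (mc_lunit C a))))) = mc_id C a \<and>
        mc_cmp C (mc_lunit C (dual a)) (mc_cmp C (mc_tensm C (ev a) (mc_id C (dual a)))
          (mc_cmp C (mc_inv C (mc_assoc C (dual a) a (dual a)))
            (mc_cmp C (mc_tensm C (mc_id C (dual a)) (coev a)) (mc_inv C (mc_runit C (dual a))))))
          = mc_id C (dual a))"

definition dual_mor ::
  "('o, 'm, 'x) mcat_scheme \<Rightarrow> ('o \<Rightarrow> 'o) \<Rightarrow> ('o \<Rightarrow> 'm) \<Rightarrow> 'm \<Rightarrow> 'm" where
  "dual_mor C dual ev f = (THE g. g \<in> mc_hom C (dual (mc_cod C f)) (dual (mc_dom C f)) \<and>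
      mc_cmp C (ev (mc_dom C f)) (mc_tensm C g (mc_id C (mc_dom C f))) =
      mc_cmp C (ev (mc_cod C f)) (mc_tensm C (mc_id C (dual (mc_cod C f))) f))"

text \<open>Duality data exhibiting d(a^*) as a dual of d a, obtained by applying the symmetric
  monoidal functor d to the duality data of a (using the braiding to put factors in order).\<close>

definition d_ev ::
  "('o, 'm, 'x) mcat_scheme \<Rightarrow> ('o \<Rightarrow> 'o) \<Rightarrow> ('m \<Rightarrow> 'm) \<Rightarrow> ('o \<Rightarrow> 'o \<Rightarrow> 'm) \<Rightarrow> 'm
     \<Rightarrow> ('o \<Rightarrow> 'o) \<Rightarrow> ('o \<Rightarrow> 'm) \<Rightarrow> 'o \<Rightarrow> 'm" where
  "d_ev C d0 d1 dmu deps dual coev a =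
     mc_cmp C deps (mc_cmp C (d1 (coev a))
       (mc_cmp C (mc_inv C (dmu a (dual a))) (mc_braid C (d0 (dual a)) (d0 a))))"

definition d_coev ::
  "('o, 'm, 'x) mcat_scheme \<Rightarrow> ('o \<Rightarrow> 'o) \<Rightarrow> ('m \<Rightarrow> 'm) \<Rightarrow> ('o \<Rightarrow> 'o \<Rightarrow> 'm) \<Rightarrow> 'm
     \<Rightarrow> ('o \<Rightarrow> 'o) \<Rightarrow> ('o \<Rightarrow> 'm) \<Rightarrow> 'o \<Rightarrow> 'm" where
  "d_coev C d0 d1 dmu deps dual ev a =
     mc_cmp C (mc_braid C (d0 (dual a)) (d0 a))
       (mc_cmp C (dmu (dual a) a) (mc_cmp C (d1 (ev a)) (mc_inv C deps)))"

definition canon_iso ::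
  "('o, 'm, 'x) mcat_scheme \<Rightarrow> ('o \<Rightarrow> 'o) \<Rightarrow> ('m \<Rightarrow> 'm) \<Rightarrow> ('o \<Rightarrow> 'o \<Rightarrow> 'm) \<Rightarrow> 'm
     \<Rightarrow> ('o \<Rightarrow> 'o) \<Rightarrow> ('o \<Rightarrow> 'm) \<Rightarrow> ('o \<Rightarrow> 'm) \<Rightarrow> 'o \<Rightarrow> 'm" where
  "canon_iso C d0 d1 dmu deps dual ev coev a =
     (THE p. p \<in> mc_hom C (d0 (dual a)) (dual (d0 a)) \<and>
        mc_cmp C (ev (d0 a)) (mc_tensm C p (mc_id C (d0 a))) = d_ev C d0 d1 dmu deps dual coev a \<and>
        mc_cmp C (mc_tensm C (mc_id C (d0 a)) p) (d_coev C d0 d1 dmu deps dual ev a) = coev (d0 a))"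

end

theory Submission
  imports Defs
begin

locale smc =
  fixes C :: "('o, 'm, 'x) mcat_scheme"
  assumes SMC: "symmetric_monoidal_category C"
begin

abbreviation Ob where "Ob \<equiv> mc_obj C"
abbreviation arr where "arr f \<equiv> f \<in> mc_arr C"
abbreviation dm where "dm \<equiv> mc_dom C"
abbreviation cd where "cd \<equiv> mc_cod C"
abbreviation cmp (infixr "\<cdot>" 55) where "g \<cdot> f \<equiv> mc_cmp C g f"
abbreviation tm (infixr "\<otimes>" 60) where "f \<otimes> g \<equiv> mc_tensm C f g"
abbreviation to (infixr "\<odot>" 60) where "a \<odot> b \<equiv> mc_tens C a b"
abbreviation U where "U \<equiv> mc_unit C"
abbreviation idm where "idm \<equiv> mc_id C"
abbreviation as where "as \<equiv> mc_assoc C"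
abbreviation lu where "lu \<equiv> mc_lunit C"
abbreviation ru where "ru \<equiv> mc_runit C"
abbreviation br where "br \<equiv> mc_braid C"
abbreviation iv where "iv \<equiv> mc_inv C"
abbreviation iso where "iso \<equiv> mc_iso C"

lemma MC: "monoidal_category C" using SMC unfolding symmetric_monoidal_category_def by auto
lemma CAT: "is_category C" using MC unfolding monoidal_category_def by auto

lemma dm_ob[simp]: "arr f \<Longrightarrow> dm f \<in> Ob" and cd_ob[simp]: "arr f \<Longrightarrow> cd f \<in> Ob"
  using CAT unfolding is_category_def by auto

lemma id_h: "a \<in> Ob \<Longrightarrow> arr (idm a) \<and> dm (idm a) = a \<and> cd (idm a) = a"
  using CAT unfolding is_category_def mc_hom_def by auto
lemma arr_id[simp]: "a \<in> Ob \<Longrightarrow> arr (idm a)" and dm_id[simp]: "a \<in> Ob \<Longrightarrow> dm (idm a) = a"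
  and cd_id[simp]: "a \<in> Ob \<Longrightarrow> cd (idm a) = a" using id_h by auto

lemma comp_h: "arr f \<Longrightarrow> arr g \<Longrightarrow> dm g = cd f \<Longrightarrow> arr (g \<cdot> f) \<and> dm (g \<cdot> f) = dm f \<and> cd (g \<cdot> f) = cd g"
  using CAT unfolding is_category_def mc_hom_def by auto
lemma arr_comp[simp]: "arr f \<Longrightarrow> arr g \<Longrightarrow> dm g = cd f \<Longrightarrow> arr (g \<cdot> f)"
  and dm_comp[simp]: "arr f \<Longrightarrow> arr g \<Longrightarrow> dm g = cd f \<Longrightarrow> dm (g \<cdot> f) = dm f"
  and cd_comp[simp]: "arr f \<Longrightarrow> arr g \<Longrightarrow> dm g = cd f \<Longrightarrow> cd (g \<cdot> f) = cd g"
  using comp_h by auto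

lemma comp_id_r[simp]: "arr f \<Longrightarrow> dm f = a \<Longrightarrow> f \<cdot> idm a = f"
  and comp_id_l[simp]: "arr f \<Longrightarrow> cd f = a \<Longrightarrow> idm a \<cdot> f = f"
  using CAT unfolding is_category_def by auto

lemma assoc[simp]: "arr f \<Longrightarrow> arr g \<Longrightarrow> arr h \<Longrightarrow> dm g = cd f \<Longrightarrow> dm h = cd g \<Longrightarrow>
   (h \<cdot> g) \<cdot> f = h \<cdot> (g \<cdot> f)"
  using CAT unfolding is_category_def by metis

lemma unit_ob[simp]: "U \<in> Ob" and tens_ob[simp]: "a \<in> Ob \<Longrightarrow> b \<in> Ob \<Longrightarrow> a \<odot> b \<in> Ob"
  using MC unfolding monoidal_category_def by auto

lemma tm_h: "arr f \<Longrightarrow> arr g \<Longrightarrow> arr (f \<otimes> g) \<and> dm (f \<otimes> g) = dm f \<odot> dm g \<and> cd (f \<otimes> g) = cd f \<odot> cd g"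
  using MC unfolding monoidal_category_def mc_hom_def by auto
lemma arr_tm[simp]: "arr f \<Longrightarrow> arr g \<Longrightarrow> arr (f \<otimes> g)"
  and dm_tm[simp]: "arr f \<Longrightarrow> arr g \<Longrightarrow> dm (f \<otimes> g) = dm f \<odot> dm g"
  and cd_tm[simp]: "arr f \<Longrightarrow> arr g \<Longrightarrow> cd (f \<otimes> g) = cd f \<odot> cd g"
  using tm_h by auto

lemma tm_id[simp]: "a \<in> Ob \<Longrightarrow> b \<in> Ob \<Longrightarrow> idm a \<otimes> idm b = idm (a \<odot> b)"
  using MC unfolding monoidal_category_def by auto

lemma interchange: "arr f \<Longrightarrow> arr g \<Longrightarrow> arr f' \<Longrightarrow> arr g' \<Longrightarrow> dm g = cd f \<Longrightarrow> dm g' = cd f' \<Longrightarrow>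
   (g \<otimes> g') \<cdot> (f \<otimes> f') = (g \<cdot> f) \<otimes> (g' \<cdot> f')"
  using MC unfolding monoidal_category_def by metis

lemma as_h: "a \<in> Ob \<Longrightarrow> b \<in> Ob \<Longrightarrow> c \<in> Ob \<Longrightarrow> arr (as a b c) \<and> dm (as a b c) = (a \<odot> b) \<odot> c \<and>
   cd (as a b c) = a \<odot> (b \<odot> c) \<and> iso (as a b c)"
  using MC unfolding monoidal_category_def mc_hom_def by auto
lemma arr_as[simp]: "a \<in> Ob \<Longrightarrow> b \<in> Ob \<Longrightarrow> c \<in> Ob \<Longrightarrow> arr (as a b c)"
  and dm_as[simp]: "a \<in> Ob \<Longrightarrow> b \<in> Ob \<Longrightarrow> c \<in> Ob \<Longrightarrow> dm (as a b c) = (a \<odot> b) \<odot> c"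
  and cd_as[simp]: "a \<in> Ob \<Longrightarrow> b \<in> Ob \<Longrightarrow> c \<in> Ob \<Longrightarrow> cd (as a b c) = a \<odot> (b \<odot> c)"
  and iso_as[simp]: "a \<in> Ob \<Longrightarrow> b \<in> Ob \<Longrightarrow> c \<in> Ob \<Longrightarrow> iso (as a b c)"
  using as_h by auto

lemma as_nat: "arr f \<Longrightarrow> arr g \<Longrightarrow> arr h \<Longrightarrow>
   as (cd f) (cd g) (cd h) \<cdot> ((f \<otimes> g) \<otimes> h) = (f \<otimes> (g \<otimes> h)) \<cdot> as (dm f) (dm g) (dm h)"
  using MC unfolding monoidal_category_def by auto

lemma lu_h: "a \<in> Ob \<Longrightarrow> arr (lu a) \<and> dm (lu a) = U \<odot> a \<and> cd (lu a) = a \<and> iso (lu a)"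
  using MC unfolding monoidal_category_def mc_hom_def by auto
lemma arr_lu[simp]: "a \<in> Ob \<Longrightarrow> arr (lu a)" and dm_lu[simp]: "a \<in> Ob \<Longrightarrow> dm (lu a) = U \<odot> a"
  and cd_lu[simp]: "a \<in> Ob \<Longrightarrow> cd (lu a) = a" and iso_lu[simp]: "a \<in> Ob \<Longrightarrow> iso (lu a)"
  using lu_h by auto
lemma lu_nat: "arr f \<Longrightarrow> lu (cd f) \<cdot> (idm U \<otimes> f) = f \<cdot> lu (dm f)"
  using MC unfolding monoidal_category_def by auto

lemma ru_h: "a \<in> Ob \<Longrightarrow> arr (ru a) \<and> dm (ru a) = a \<odot> U \<and> cd (ru a) = a \<and> iso (ru a)"
  using MC unfolding monoidal_category_def mc_hom_def by auto
lemma arr_ru[simp]: "a \<in> Ob \<Longrightarrow> arr (ru a)" and dm_ru[simp]: "a \<in> Ob \<Longrightarrow> dm (ru a) = a \<odot> U"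
  and cd_ru[simp]: "a \<in> Ob \<Longrightarrow> cd (ru a) = a" and iso_ru[simp]: "a \<in> Ob \<Longrightarrow> iso (ru a)"
  using ru_h by auto
lemma ru_nat: "arr f \<Longrightarrow> ru (cd f) \<cdot> (f \<otimes> idm U) = f \<cdot> ru (dm f)"
  using MC unfolding monoidal_category_def by auto

lemma pentagon: "a \<in> Ob \<Longrightarrow> b \<in> Ob \<Longrightarrow> c \<in> Ob \<Longrightarrow> e \<in> Ob \<Longrightarrow>
   as a b (c \<odot> e) \<cdot> as (a \<odot> b) c e = (idm a \<otimes> as b c e) \<cdot> (as a (b \<odot> c) e \<cdot> (as a b c \<otimes> idm e))"
  using MC unfolding monoidal_category_def by auto

lemma triangle: "a \<in> Ob \<Longrightarrow> b \<in> Ob \<Longrightarrow> (idm a \<otimes> lu b) \<cdot> as a U b = ru a \<otimes> idm b"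
  using MC unfolding monoidal_category_def by auto

lemma br_h: "a \<in> Ob \<Longrightarrow> b \<in> Ob \<Longrightarrow> arr (br a b) \<and> dm (br a b) = a \<odot> b \<and> cd (br a b) = b \<odot> a"
  using SMC unfolding symmetric_monoidal_category_def mc_hom_def by auto
lemma arr_br[simp]: "a \<in> Ob \<Longrightarrow> b \<in> Ob \<Longrightarrow> arr (br a b)"
  and dm_br[simp]: "a \<in> Ob \<Longrightarrow> b \<in> Ob \<Longrightarrow> dm (br a b) = a \<odot> b"
  and cd_br[simp]: "a \<in> Ob \<Longrightarrow> b \<in> Ob \<Longrightarrow> cd (br a b) = b \<odot> a"
  using br_h by auto
lemma br_nat: "arr f \<Longrightarrow> arr g \<Longrightarrow> br (cd f) (cd g) \<cdot> (f \<otimes> g) = (g \<otimes> f) \<cdot> br (dm f) (dm g)"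
  using SMC unfolding symmetric_monoidal_category_def by auto
lemma br_br: "a \<in> Ob \<Longrightarrow> b \<in> Ob \<Longrightarrow> br b a \<cdot> br a b = idm (a \<odot> b)"
  using SMC unfolding symmetric_monoidal_category_def by auto
lemma hexagon: "a \<in> Ob \<Longrightarrow> b \<in> Ob \<Longrightarrow> c \<in> Ob \<Longrightarrow>
  as b c a \<cdot> (br a (b \<odot> c) \<cdot> as a b c) = (idm b \<otimes> br a c) \<cdot> (as b a c \<cdot> (br a b \<otimes> idm c))"
  using SMC unfolding symmetric_monoidal_category_def by auto


lemma iv_h: assumes "iso f" shows "arr (iv f) \<and> dm (iv f) = cd f \<and> cd (iv f) = dm f \<and>
   iv f \<cdot> f = idm (dm f) \<and> f \<cdot> iv f = idm (cd f)"
proof -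
  from assms obtain g where g: "g \<in> mc_hom C (cd f) (dm f)" "g \<cdot> f = idm (dm f)" "f \<cdot> g = idm (cd f)"
    and af: "arr f" unfolding mc_iso_def by auto
  have ag: "arr g" "dm g = cd f" "cd g = dm f" using g(1) unfolding mc_hom_def by auto
  have "iv f = g" unfolding mc_inv_def
  proof (rule the_equality)
    show "g \<in> mc_hom C (cd f) (dm f) \<and> g \<cdot> f = idm (dm f) \<and> f \<cdot> g = idm (cd f)" using g by auto
  next
    fix h assume h: "h \<in> mc_hom C (cd f) (dm f) \<and> h \<cdot> f = idm (dm f) \<and> f \<cdot> h = idm (cd f)"
    then have ah: "arr h" "dm h = cd f" "cd h = dm f" unfolding mc_hom_def by auto
    have "h = (g \<cdot> f) \<cdot> h" using h ah g by simp
    also have "\<dots> = g \<cdot> (f \<cdot> h)" using ah ag af by simp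
    also have "\<dots> = g" using h ag by simp
    finally show "h = g" .
  qed
  then show ?thesis using g ag by simp
qed

lemma arr_iv[simp]: "iso f \<Longrightarrow> arr (iv f)" and dm_iv[simp]: "iso f \<Longrightarrow> dm (iv f) = cd f"
  and cd_iv[simp]: "iso f \<Longrightarrow> cd (iv f) = dm f" using iv_h by auto
lemma iso_arr: "iso f \<Longrightarrow> arr f" unfolding mc_iso_def by auto
lemma iv_l[simp]: "iso f \<Longrightarrow> dm f = a \<Longrightarrow> iv f \<cdot> f = idm a" using iv_h by auto
lemma iv_r[simp]: "iso f \<Longrightarrow> cd f = a \<Longrightarrow> f \<cdot> iv f = idm a" using iv_h by auto
lemma iv_l'[simp]: "iso f \<Longrightarrow> arr h \<Longrightarrow> dm f = cd h \<Longrightarrow> iv f \<cdot> (f \<cdot> h) = h"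
proof -
  assume a: "iso f" "arr h" "dm f = cd h"
  then have "iv f \<cdot> (f \<cdot> h) = (iv f \<cdot> f) \<cdot> h" using iso_arr[OF a(1)] assoc[of h f "iv f"] by simp
  then show ?thesis using a iso_arr[OF a(1)] by simp
qed
lemma iv_r'[simp]: "iso f \<Longrightarrow> arr h \<Longrightarrow> cd f = cd h \<Longrightarrow> f \<cdot> (iv f \<cdot> h) = h"
proof -
  assume a: "iso f" "arr h" "cd f = cd h"
  then have "f \<cdot> (iv f \<cdot> h) = (f \<cdot> iv f) \<cdot> h" using iso_arr[OF a(1)] assoc[of h "iv f" f] by simp
  then show ?thesis using a iso_arr[OF a(1)] by simp
qed

lemma isoI: "arr f \<Longrightarrow> arr g \<Longrightarrow> dm g = cd f \<Longrightarrow> cd g = dm f \<Longrightarrow> g \<cdot> f = idm (dm f) \<Longrightarrow> f \<cdot> g = idm (cd f) \<Longrightarrow> iso f"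
  unfolding mc_iso_def mc_hom_def by auto
lemma iv_unique: "arr f \<Longrightarrow> arr g \<Longrightarrow> dm g = cd f \<Longrightarrow> cd g = dm f \<Longrightarrow> g \<cdot> f = idm (dm f) \<Longrightarrow> f \<cdot> g = idm (cd f) \<Longrightarrow> iv f = g"
proof -
  assume a: "arr f" "arr g" "dm g = cd f" "cd g = dm f" "g \<cdot> f = idm (dm f)" "f \<cdot> g = idm (cd f)"
  then have i: "iso f" by (rule isoI)
  have "iv f = iv f \<cdot> (f \<cdot> g)" using a i by simp
  also have "\<dots> = g" using a(1-4) i by (simp del: iv_r)
  finally show ?thesis .
qed

lemma iso_comp[simp]: "iso f \<Longrightarrow> iso g \<Longrightarrow> dm g = cd f \<Longrightarrow> iso (g \<cdot> f)"
  by (rule isoI[where g="iv f \<cdot> iv g"]) (auto simp: iso_arr)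
lemma iv_comp: "iso f \<Longrightarrow> iso g \<Longrightarrow> dm g = cd f \<Longrightarrow> iv (g \<cdot> f) = iv f \<cdot> iv g"
  by (rule iv_unique) (auto simp: iso_arr)
lemma iso_tm[simp]: "iso f \<Longrightarrow> iso g \<Longrightarrow> iso (f \<otimes> g)"
  by (rule isoI[where g="iv f \<otimes> iv g"]) (auto simp: iso_arr interchange)
lemma iv_tm: "iso f \<Longrightarrow> iso g \<Longrightarrow> iv (f \<otimes> g) = iv f \<otimes> iv g"
  by (rule iv_unique) (auto simp: iso_arr interchange)
lemma iso_id[simp]: "a \<in> Ob \<Longrightarrow> iso (idm a)" by (rule isoI[where g="idm a"]) auto
lemma iv_id[simp]: "a \<in> Ob \<Longrightarrow> iv (idm a) = idm a" by (rule iv_unique) auto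
lemma iso_iv[simp]: "iso f \<Longrightarrow> iso (iv f)" by (rule isoI[where g=f]) (auto simp: iso_arr)
lemma iv_iv[simp]: "iso f \<Longrightarrow> iv (iv f) = f" by (rule iv_unique) (auto simp: iso_arr)

lemma iso_br[simp]: "a \<in> Ob \<Longrightarrow> b \<in> Ob \<Longrightarrow> iso (br a b)"
  by (rule isoI[where g="br b a"]) (auto simp: br_br)
lemma iv_br[simp]: "a \<in> Ob \<Longrightarrow> b \<in> Ob \<Longrightarrow> iv (br a b) = br b a"
  by (rule iv_unique) (auto simp: br_br)

lemma canc_r: "iso x \<Longrightarrow> arr h1 \<Longrightarrow> arr h2 \<Longrightarrow> dm h1 = cd x \<Longrightarrow> dm h2 = cd x \<Longrightarrow> h1 \<cdot> x = h2 \<cdot> x \<Longrightarrow> h1 = h2"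
proof -
  assume a: "iso x" "arr h1" "arr h2" "dm h1 = cd x" "dm h2 = cd x" "h1 \<cdot> x = h2 \<cdot> x"
  have "h1 = (h1 \<cdot> x) \<cdot> iv x" using a(1-5) iso_arr[OF a(1)] by simp
  also have "\<dots> = (h2 \<cdot> x) \<cdot> iv x" using a(6) by (simp only:)
  also have "\<dots> = h2" using a(1-5) iso_arr[OF a(1)] by simp
  finally show ?thesis .
qed
lemma canc_l: "iso x \<Longrightarrow> arr h1 \<Longrightarrow> arr h2 \<Longrightarrow> cd h1 = dm x \<Longrightarrow> cd h2 = dm x \<Longrightarrow> x \<cdot> h1 = x \<cdot> h2 \<Longrightarrow> h1 = h2"
proof -
  assume a: "iso x" "arr h1" "arr h2" "cd h1 = dm x" "cd h2 = dm x" "x \<cdot> h1 = x \<cdot> h2"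
  have "h1 = iv x \<cdot> (x \<cdot> h1)" using a(1-5) iso_arr[OF a(1)] by simp
  also have "\<dots> = iv x \<cdot> (x \<cdot> h2)" using a(6) by (simp only:)
  also have "\<dots> = h2" using a(1-5) iso_arr[OF a(1)] by simp
  finally show ?thesis .
qed

lemma tl: "g \<cdot> f = k \<Longrightarrow> arr f \<Longrightarrow> arr g \<Longrightarrow> arr h \<Longrightarrow> dm g = cd f \<Longrightarrow> dm f = cd h \<Longrightarrow> g \<cdot> (f \<cdot> h) = k \<cdot> h"
  by (metis assoc)

lemma lu_canc: "arr f \<Longrightarrow> arr g \<Longrightarrow> dm f = dm g \<Longrightarrow> cd f = cd g \<Longrightarrow> idm U \<otimes> f = idm U \<otimes> g \<Longrightarrow> f = g"
proof -
  assume a: "arr f" "arr g" "dm f = dm g" "cd f = cd g" "idm U \<otimes> f = idm U \<otimes> g"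
  have "f \<cdot> lu (dm f) = g \<cdot> lu (dm f)" using lu_nat[OF a(1)] lu_nat[OF a(2)] a by simp
  then show ?thesis by (rule canc_r[rotated 5]) (use a in auto)
qed
lemma ru_canc: "arr f \<Longrightarrow> arr g \<Longrightarrow> dm f = dm g \<Longrightarrow> cd f = cd g \<Longrightarrow> f \<otimes> idm U = g \<otimes> idm U \<Longrightarrow> f = g"
proof -
  assume a: "arr f" "arr g" "dm f = dm g" "cd f = cd g" "f \<otimes> idm U = g \<otimes> idm U"
  have "f \<cdot> ru (dm f) = g \<cdot> ru (dm f)" using ru_nat[OF a(1)] ru_nat[OF a(2)] a by simp
  then show ?thesis by (rule canc_r[rotated 5]) (use a in auto)
qed

end
context smc begin

lemma tl2: "g \<cdot> f = k \<Longrightarrow> arr f \<Longrightarrow> arr g \<Longrightarrow> arr h \<Longrightarrow> dm g = cd f \<Longrightarrow> dm f = cd h \<Longrightarrow> g \<cdot> (f \<cdot> h) = k \<cdot> h"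
  by (metis assoc)
lemma tl3: "g \<cdot> (f \<cdot> e) = k \<Longrightarrow> arr e \<Longrightarrow> arr f \<Longrightarrow> arr g \<Longrightarrow> arr h \<Longrightarrow> dm g = cd f \<Longrightarrow> dm f = cd e \<Longrightarrow> dm e = cd h \<Longrightarrow> g \<cdot> (f \<cdot> (e \<cdot> h)) = k \<cdot> h"
  by (metis assoc arr_comp cd_comp dm_comp)

lemma K1: assumes "a \<in> Ob" "b \<in> Ob" shows "lu (a \<odot> b) \<cdot> as U a b = lu a \<otimes> idm b"
proof -
  note [simp] = assms
  define X where "X = as U (U \<odot> a) b \<cdot> (as U U a \<otimes> idm b)"
  have X: "arr X" "dm X = ((U \<odot> U) \<odot> a) \<odot> b" "cd X = U \<odot> ((U \<odot> a) \<odot> b)" "iso X" unfolding X_def by auto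
  have P: "as U U (a \<odot> b) \<cdot> as (U \<odot> U) a b = (idm U \<otimes> as U a b) \<cdot> X"
    using pentagon[of U U a b] unfolding X_def by simp
  have T1: "(idm U \<otimes> lu (a \<odot> b)) \<cdot> as U U (a \<odot> b) = ru U \<otimes> idm (a \<odot> b)" using triangle[of U "a \<odot> b"] by simp
  have T2: "(idm U \<otimes> lu a) \<cdot> as U U a = ru U \<otimes> idm a" using triangle[of U a] by simp
  have N1: "as U a b \<cdot> ((ru U \<otimes> idm a) \<otimes> idm b) = (ru U \<otimes> idm (a \<odot> b)) \<cdot> as (U \<odot> U) a b"
    using as_nat[of "ru U" "idm a" "idm b"] by simp
  have N2: "as U a b \<cdot> ((idm U \<otimes> lu a) \<otimes> idm b) = (idm U \<otimes> (lu a \<otimes> idm b)) \<cdot> as U (U \<odot> a) b"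
    using as_nat[of "idm U" "lu a" "idm b"] by simp
  have "(idm U \<otimes> (lu (a \<odot> b) \<cdot> as U a b)) \<cdot> X = (idm U \<otimes> lu (a \<odot> b)) \<cdot> ((idm U \<otimes> as U a b) \<cdot> X)"
  proof -
    have I: "(idm U \<otimes> lu (a \<odot> b)) \<cdot> (idm U \<otimes> as U a b) = idm U \<otimes> (lu (a \<odot> b) \<cdot> as U a b)"
      by (simp add: interchange)
    show ?thesis using X by (simp add: tl2[OF I])
  qed
  also have "\<dots> = (idm U \<otimes> lu (a \<odot> b)) \<cdot> (as U U (a \<odot> b) \<cdot> as (U \<odot> U) a b)" using P by simp
  also have "\<dots> = (ru U \<otimes> idm (a \<odot> b)) \<cdot> as (U \<odot> U) a b" by (simp add: tl2[OF T1])
  also have "\<dots> = as U a b \<cdot> ((ru U \<otimes> idm a) \<otimes> idm b)" by (simp add: N1)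
  also have "\<dots> = as U a b \<cdot> (((idm U \<otimes> lu a) \<cdot> as U U a) \<otimes> idm b)" by (simp add: T2)
  also have "\<dots> = as U a b \<cdot> (((idm U \<otimes> lu a) \<otimes> idm b) \<cdot> (as U U a \<otimes> idm b))" by (simp add: interchange)
  also have "\<dots> = (idm U \<otimes> (lu a \<otimes> idm b)) \<cdot> X" unfolding X_def by (simp add: tl2[OF N2])
  finally have "(idm U \<otimes> (lu (a \<odot> b) \<cdot> as U a b)) \<cdot> X = (idm U \<otimes> (lu a \<otimes> idm b)) \<cdot> X" .
  then have "idm U \<otimes> (lu (a \<odot> b) \<cdot> as U a b) = idm U \<otimes> (lu a \<otimes> idm b)"
    by (rule canc_r[rotated 5]) (use X in auto)
  then show ?thesis by (rule lu_canc[rotated 4]) auto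
qed


lemma K3: assumes "a \<in> Ob" "b \<in> Ob" shows "(idm a \<otimes> ru b) \<cdot> as a b U = ru (a \<odot> b)"
proof -
  note [simp] = assms
  define X where "X = as a (b \<odot> U) U \<cdot> (as a b U \<otimes> idm U)"
  have X: "arr X" "dm X = ((a \<odot> b) \<odot> U) \<odot> U" "cd X = a \<odot> ((b \<odot> U) \<odot> U)" "iso X" unfolding X_def by auto
  have P: "as a b (U \<odot> U) \<cdot> as (a \<odot> b) U U = (idm a \<otimes> as b U U) \<cdot> X"
    using pentagon[of a b U U] unfolding X_def by simp
  have T1: "(idm (a \<odot> b) \<otimes> lu U) \<cdot> as (a \<odot> b) U U = ru (a \<odot> b) \<otimes> idm U" using triangle[of "a \<odot> b" U] by simp
  have T2: "(idm b \<otimes> lu U) \<cdot> as b U U = ru b \<otimes> idm U" using triangle[of b U] by simp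
  have N1: "as a b U \<cdot> (idm (a \<odot> b) \<otimes> lu U) = (idm a \<otimes> (idm b \<otimes> lu U)) \<cdot> as a b (U \<odot> U)"
    using as_nat[of "idm a" "idm b" "lu U"] by simp
  have N2: "as a b U \<cdot> ((idm a \<otimes> ru b) \<otimes> idm U) = (idm a \<otimes> (ru b \<otimes> idm U)) \<cdot> as a (b \<odot> U) U"
    using as_nat[of "idm a" "ru b" "idm U"] by simp
  have "as a b U \<cdot> (ru (a \<odot> b) \<otimes> idm U) = as a b U \<cdot> ((idm (a \<odot> b) \<otimes> lu U) \<cdot> as (a \<odot> b) U U)"
    by (simp add: T1)
  also have "\<dots> = (idm a \<otimes> (idm b \<otimes> lu U)) \<cdot> (as a b (U \<odot> U) \<cdot> as (a \<odot> b) U U)"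
    by (simp add: tl2[OF N1])
  also have "\<dots> = (idm a \<otimes> (idm b \<otimes> lu U)) \<cdot> ((idm a \<otimes> as b U U) \<cdot> X)" by (simp add: P)
  also have "\<dots> = (idm a \<otimes> (ru b \<otimes> idm U)) \<cdot> X"
  proof -
    have I: "(idm a \<otimes> (idm b \<otimes> lu U)) \<cdot> (idm a \<otimes> as b U U) = idm a \<otimes> (ru b \<otimes> idm U)"
      by (simp add: interchange T2)
    show ?thesis using X by (simp add: tl2[OF I])
  qed
  also have "\<dots> = as a b U \<cdot> (((idm a \<otimes> ru b) \<otimes> idm U) \<cdot> (as a b U \<otimes> idm U))"
    unfolding X_def by (simp add: tl2[OF N2])
  also have "\<dots> = as a b U \<cdot> (((idm a \<otimes> ru b) \<cdot> as a b U) \<otimes> idm U)" by (simp add: interchange)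
  finally have "as a b U \<cdot> (ru (a \<odot> b) \<otimes> idm U) = as a b U \<cdot> (((idm a \<otimes> ru b) \<cdot> as a b U) \<otimes> idm U)" .
  then have "ru (a \<odot> b) \<otimes> idm U = ((idm a \<otimes> ru b) \<cdot> as a b U) \<otimes> idm U"
    by (rule canc_l[rotated 5]) auto
  then show ?thesis by (rule ru_canc[rotated 4, symmetric]) auto
qed

lemma K2: "lu U = ru U"
proof -
  have T: "(idm U \<otimes> lu U) \<cdot> as U U U = ru U \<otimes> idm U" using triangle[of U U] by simp
  have K: "lu (U \<odot> U) \<cdot> as U U U = lu U \<otimes> idm U" using K1[of U U] by simp
  have "lu U \<cdot> (idm U \<otimes> lu U) = lu U \<cdot> lu (U \<odot> U)" using lu_nat[of "lu U"] by simp
  then have E: "idm U \<otimes> lu U = lu (U \<odot> U)" by (rule canc_l[rotated 5]) auto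
  have "ru U \<otimes> idm U = lu U \<otimes> idm U" using T K E by simp
  then show ?thesis by (rule ru_canc[rotated 4, symmetric]) auto
qed

lemma B1: assumes "a \<in> Ob" shows "lu a \<cdot> br a U = ru a"
proof -
  note [simp] = assms
  have H: "as U U a \<cdot> (br a (U \<odot> U) \<cdot> as a U U) = (idm U \<otimes> br a U) \<cdot> (as U a U \<cdot> (br a U \<otimes> idm U))"
    using hexagon[of a U U] by simp
  have K1a: "lu (U \<odot> a) \<cdot> as U U a = lu U \<otimes> idm a" using K1[of U a] by simp
  have K1b: "lu (a \<odot> U) \<cdot> as U a U = lu a \<otimes> idm U" using K1[of a U] by simp
  have Nb: "br a U \<cdot> (idm a \<otimes> lu U) = (lu U \<otimes> idm a) \<cdot> br a (U \<odot> U)" using br_nat[of "idm a" "lu U"] by simp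
  have T: "(idm a \<otimes> lu U) \<cdot> as a U U = ru a \<otimes> idm U" using triangle[of a U] by simp
  have Nl: "lu (U \<odot> a) \<cdot> (idm U \<otimes> br a U) = br a U \<cdot> lu (a \<odot> U)" using lu_nat[of "br a U"] by simp
  have "br a U \<cdot> (ru a \<otimes> idm U) = br a U \<cdot> ((idm a \<otimes> lu U) \<cdot> as a U U)" by (simp add: T)
  also have "\<dots> = (lu U \<otimes> idm a) \<cdot> (br a (U \<odot> U) \<cdot> as a U U)" by (simp add: tl2[OF Nb])
  also have "\<dots> = lu (U \<odot> a) \<cdot> (as U U a \<cdot> (br a (U \<odot> U) \<cdot> as a U U))" by (simp add: tl2[OF K1a, symmetric])
  also have "\<dots> = lu (U \<odot> a) \<cdot> ((idm U \<otimes> br a U) \<cdot> (as U a U \<cdot> (br a U \<otimes> idm U)))" by (simp add: H)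
  also have "\<dots> = br a U \<cdot> (lu (a \<odot> U) \<cdot> (as U a U \<cdot> (br a U \<otimes> idm U)))" by (simp add: tl2[OF Nl])
  also have "\<dots> = br a U \<cdot> ((lu a \<otimes> idm U) \<cdot> (br a U \<otimes> idm U))" by (simp add: tl2[OF K1b])
  also have "\<dots> = br a U \<cdot> ((lu a \<cdot> br a U) \<otimes> idm U)" by (simp add: interchange)
  finally have "br a U \<cdot> (ru a \<otimes> idm U) = br a U \<cdot> ((lu a \<cdot> br a U) \<otimes> idm U)" .
  then have "ru a \<otimes> idm U = (lu a \<cdot> br a U) \<otimes> idm U" by (rule canc_l[rotated 5]) auto
  then show ?thesis by (rule ru_canc[rotated 4, symmetric]) auto
qed


lemma br_br'[simp]: "a \<in> Ob \<Longrightarrow> b \<in> Ob \<Longrightarrow> arr h \<Longrightarrow> cd h = a \<odot> b \<Longrightarrow> br b a \<cdot> (br a b \<cdot> h) = h"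
  by (simp add: tl2[OF br_br])
declare br_br[simp]
lemma BBl[simp]: "a \<in> Ob \<Longrightarrow> b \<in> Ob \<Longrightarrow> c \<in> Ob \<Longrightarrow> (br b a \<otimes> idm c) \<cdot> (br a b \<otimes> idm c) = idm ((a \<odot> b) \<odot> c)"
  by (simp add: interchange br_br)
lemma BBr[simp]: "a \<in> Ob \<Longrightarrow> b \<in> Ob \<Longrightarrow> c \<in> Ob \<Longrightarrow> (idm c \<otimes> br b a) \<cdot> (idm c \<otimes> br a b) = idm (c \<odot> (a \<odot> b))"
  by (simp add: interchange br_br)
lemma BBl'[simp]: "a \<in> Ob \<Longrightarrow> b \<in> Ob \<Longrightarrow> c \<in> Ob \<Longrightarrow> arr h \<Longrightarrow> cd h = (a \<odot> b) \<odot> c \<Longrightarrow> (br b a \<otimes> idm c) \<cdot> ((br a b \<otimes> idm c) \<cdot> h) = h"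
  by (simp add: tl2[OF BBl])
lemma BBr'[simp]: "a \<in> Ob \<Longrightarrow> b \<in> Ob \<Longrightarrow> c \<in> Ob \<Longrightarrow> arr h \<Longrightarrow> cd h = c \<odot> (a \<odot> b) \<Longrightarrow> (idm c \<otimes> br b a) \<cdot> ((idm c \<otimes> br a b) \<cdot> h) = h"
  by (simp add: tl2[OF BBr])

lemma Hs: assumes "a \<in> Ob" "b \<in> Ob" "c \<in> Ob"
  shows "br a (b \<odot> c) \<cdot> as a b c = iv (as b c a) \<cdot> ((idm b \<otimes> br a c) \<cdot> (as b a c \<cdot> (br a b \<otimes> idm c)))"
proof -
  note [simp] = assms
  have "br a (b \<odot> c) \<cdot> as a b c = iv (as b c a) \<cdot> (as b c a \<cdot> (br a (b \<odot> c) \<cdot> as a b c))" by simp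
  also have "\<dots> = iv (as b c a) \<cdot> ((idm b \<otimes> br a c) \<cdot> (as b a c \<cdot> (br a b \<otimes> idm c)))"
    using hexagon[of a b c] by simp
  finally show ?thesis .
qed

lemma H2: assumes "a \<in> Ob" "b \<in> Ob" "c \<in> Ob"
  shows "as c a b \<cdot> ((br a c \<otimes> idm b) \<cdot> (iv (as a c b) \<cdot> ((idm a \<otimes> br b c) \<cdot> as a b c))) = br (a \<odot> b) c"
proof -
  note [simp] = assms
  have Hc: "br c (a \<odot> b) \<cdot> as c a b = iv (as a b c) \<cdot> ((idm a \<otimes> br c b) \<cdot> (as a c b \<cdot> (br c a \<otimes> idm b)))"
    using Hs[of c a b] by simp
  have "br c (a \<odot> b) \<cdot> (as c a b \<cdot> ((br a c \<otimes> idm b) \<cdot> (iv (as a c b) \<cdot> ((idm a \<otimes> br b c) \<cdot> as a b c))))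
     = idm ((a \<odot> b) \<odot> c)" by (simp add: tl2[OF Hc])
  also have "\<dots> = br c (a \<odot> b) \<cdot> br (a \<odot> b) c" by (simp add: br_br)
  finally show ?thesis by (rule canc_l[rotated 5]) auto
qed

lemma Nid: assumes "a \<in> Ob" "b \<in> Ob" "c \<in> Ob"
  shows "as c a b \<cdot> (br b (c \<odot> a) \<cdot> (as b c a \<cdot> (br a (b \<odot> c) \<cdot> as a b c))) = br (a \<odot> b) c"
proof -
  note [simp] = assms
  have Ha: "as b c a \<cdot> (br a (b \<odot> c) \<cdot> as a b c) = (idm b \<otimes> br a c) \<cdot> (as b a c \<cdot> (br a b \<otimes> idm c))"
    using hexagon[of a b c] by simp
  have Nb: "br b (c \<odot> a) \<cdot> (idm b \<otimes> br a c) = (br a c \<otimes> idm b) \<cdot> br b (a \<odot> c)"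
    using br_nat[of "idm b" "br a c"] by simp
  have Hb: "br b (a \<odot> c) \<cdot> as b a c = iv (as a c b) \<cdot> ((idm a \<otimes> br b c) \<cdot> (as a b c \<cdot> (br b a \<otimes> idm c)))"
    using Hs[of b a c] by simp
  have "as c a b \<cdot> (br b (c \<odot> a) \<cdot> (as b c a \<cdot> (br a (b \<odot> c) \<cdot> as a b c)))
    = as c a b \<cdot> ((br a c \<otimes> idm b) \<cdot> (iv (as a c b) \<cdot> ((idm a \<otimes> br b c) \<cdot> as a b c)))"
    by (simp add: Ha tl2[OF Nb] tl2[OF Hb])
  also have "\<dots> = br (a \<odot> b) c" using H2 by simp
  finally show ?thesis .
qed


lemma B1i: assumes "a \<in> Ob" shows "iv (lu a) = br a U \<cdot> iv (ru a)"
proof -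
  note [simp] = assms
  have "iv (lu a) = iv (lu a) \<cdot> (ru a \<cdot> iv (ru a))" by simp
  also have "\<dots> = iv (lu a) \<cdot> ((lu a \<cdot> br a U) \<cdot> iv (ru a))" by (simp only: B1[OF assms])
  also have "\<dots> = br a U \<cdot> iv (ru a)" by simp
  finally show ?thesis .
qed
lemma B1': assumes "a \<in> Ob" shows "ru a \<cdot> br U a = lu a"
proof -
  have "ru a \<cdot> br U a = (lu a \<cdot> br a U) \<cdot> br U a" by (simp only: B1[OF assms])
  also have "\<dots> = lu a" using assms by simp
  finally show ?thesis .
qed

definition zz1e where "zz1e x y e c = ru x \<cdot> ((idm x \<otimes> e) \<cdot> (as x y x \<cdot> ((c \<otimes> idm x) \<cdot> iv (lu x))))"
definition zz2e where "zz2e x y e c = lu y \<cdot> ((e \<otimes> idm y) \<cdot> (iv (as y x y) \<cdot> ((idm y \<otimes> c) \<cdot> iv (ru y))))"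

lemma Sw: assumes "u \<in> Ob" "v \<in> Ob" "arr E" "dm E = u \<odot> v" "cd E = U" "arr Cc" "dm Cc = U" "cd Cc = v \<odot> u"
  shows "zz1e u v (E \<cdot> br v u) (br v u \<cdot> Cc) = zz2e v u E Cc"
proof -
  note [simp] = assms
  have I1: "idm u \<otimes> (E \<cdot> br v u) = (idm u \<otimes> E) \<cdot> (idm u \<otimes> br v u)" by (simp add: interchange)
  have I2: "(br v u \<cdot> Cc) \<otimes> idm u = (br v u \<otimes> idm u) \<cdot> (Cc \<otimes> idm u)" by (simp add: interchange)
  have H: "(idm u \<otimes> br v u) \<cdot> (as u v u \<cdot> (br v u \<otimes> idm u)) = as u u v \<cdot> (br v (u \<odot> u) \<cdot> as v u u)"
    using hexagon[of v u u] by simp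
  have Nc: "(Cc \<otimes> idm u) \<cdot> br u U = br u (v \<odot> u) \<cdot> (idm u \<otimes> Cc)" using br_nat[of "idm u" Cc] by simp
  have Nd: "as u u v \<cdot> (br v (u \<odot> u) \<cdot> (as v u u \<cdot> (br u (v \<odot> u) \<cdot> ((idm u \<otimes> Cc) \<cdot> iv (ru u)))))
     = br (u \<odot> v) u \<cdot> (iv (as u v u) \<cdot> ((idm u \<otimes> Cc) \<cdot> iv (ru u)))"
  proof -
    have "(as u u v \<cdot> (br v (u \<odot> u) \<cdot> (as v u u \<cdot> (br u (v \<odot> u) \<cdot> as u v u)))) \<cdot> (iv (as u v u) \<cdot> ((idm u \<otimes> Cc) \<cdot> iv (ru u)))
      = br (u \<odot> v) u \<cdot> (iv (as u v u) \<cdot> ((idm u \<otimes> Cc) \<cdot> iv (ru u)))" using Nid[of u v u] by simp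
    then show ?thesis by simp
  qed
  have Ne: "(idm u \<otimes> E) \<cdot> br (u \<odot> v) u = br U u \<cdot> (E \<otimes> idm u)" using br_nat[of E "idm u"] by simp
  have "zz1e u v (E \<cdot> br v u) (br v u \<cdot> Cc) =
     ru u \<cdot> ((idm u \<otimes> E) \<cdot> ((idm u \<otimes> br v u) \<cdot> (as u v u \<cdot> ((br v u \<otimes> idm u) \<cdot> ((Cc \<otimes> idm u) \<cdot> iv (lu u))))))"
    unfolding zz1e_def I1 I2 by simp
  also have "\<dots> = ru u \<cdot> ((idm u \<otimes> E) \<cdot> (as u u v \<cdot> (br v (u \<odot> u) \<cdot> (as v u u \<cdot> ((Cc \<otimes> idm u) \<cdot> iv (lu u))))))"
    by (simp add: tl3[OF H])
  also have "\<dots> = ru u \<cdot> ((idm u \<otimes> E) \<cdot> (as u u v \<cdot> (br v (u \<odot> u) \<cdot> (as v u u \<cdot> (br u (v \<odot> u) \<cdot> ((idm u \<otimes> Cc) \<cdot> iv (ru u)))))))"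
    by (simp add: B1i tl2[OF Nc])
  also have "\<dots> = ru u \<cdot> ((idm u \<otimes> E) \<cdot> (br (u \<odot> v) u \<cdot> (iv (as u v u) \<cdot> ((idm u \<otimes> Cc) \<cdot> iv (ru u)))))"
    by (simp add: Nd)
  also have "\<dots> = lu u \<cdot> ((E \<otimes> idm u) \<cdot> (iv (as u v u) \<cdot> ((idm u \<otimes> Cc) \<cdot> iv (ru u))))"
    by (simp add: tl2[OF Ne] tl2[OF B1'])
  also have "\<dots> = zz2e v u E Cc" unfolding zz2e_def by simp
  finally show ?thesis .
qed

end
context smc begin

lemma tiv1[simp]: "iso f \<Longrightarrow> a \<in> Ob \<Longrightarrow> (iv f \<otimes> idm a) \<cdot> (f \<otimes> idm a) = idm (dm f \<odot> a)"
  by (simp add: interchange iso_arr)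
lemma tiv2[simp]: "iso f \<Longrightarrow> a \<in> Ob \<Longrightarrow> (f \<otimes> idm a) \<cdot> (iv f \<otimes> idm a) = idm (cd f \<odot> a)"
  by (simp add: interchange iso_arr)
lemma tiv3[simp]: "iso f \<Longrightarrow> a \<in> Ob \<Longrightarrow> (idm a \<otimes> iv f) \<cdot> (idm a \<otimes> f) = idm (a \<odot> dm f)"
  by (simp add: interchange iso_arr)
lemma tiv4[simp]: "iso f \<Longrightarrow> a \<in> Ob \<Longrightarrow> (idm a \<otimes> f) \<cdot> (idm a \<otimes> iv f) = idm (a \<odot> cd f)"
  by (simp add: interchange iso_arr)
lemma tiv1'[simp]: "iso f \<Longrightarrow> a \<in> Ob \<Longrightarrow> arr h \<Longrightarrow> cd h = dm f \<odot> a \<Longrightarrow> (iv f \<otimes> idm a) \<cdot> ((f \<otimes> idm a) \<cdot> h) = h"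
  by (simp add: tl2[OF tiv1] iso_arr)
lemma tiv2'[simp]: "iso f \<Longrightarrow> a \<in> Ob \<Longrightarrow> arr h \<Longrightarrow> cd h = cd f \<odot> a \<Longrightarrow> (f \<otimes> idm a) \<cdot> ((iv f \<otimes> idm a) \<cdot> h) = h"
  by (simp add: tl2[OF tiv2] iso_arr)
lemma tiv3'[simp]: "iso f \<Longrightarrow> a \<in> Ob \<Longrightarrow> arr h \<Longrightarrow> cd h = a \<odot> dm f \<Longrightarrow> (idm a \<otimes> iv f) \<cdot> ((idm a \<otimes> f) \<cdot> h) = h"
  by (simp add: tl2[OF tiv3] iso_arr)
lemma tiv4'[simp]: "iso f \<Longrightarrow> a \<in> Ob \<Longrightarrow> arr h \<Longrightarrow> cd h = a \<odot> cd f \<Longrightarrow> (idm a \<otimes> f) \<cdot> ((idm a \<otimes> iv f) \<cdot> h) = h"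
  by (simp add: tl2[OF tiv4] iso_arr)

lemma flip: assumes "iso a" "iso b" "arr f" "arr g" "dm a = cd f" "dm g = cd b" "dm f = dm b" "cd a = cd g"
  and "a \<cdot> f = g \<cdot> b" shows "iv a \<cdot> g = f \<cdot> iv b"
proof -
  have aa: "arr a" "arr b" using assms iso_arr by auto
  have "iv a \<cdot> g = iv a \<cdot> (g \<cdot> (b \<cdot> iv b))" using assms aa by simp
  also have "\<dots> = iv a \<cdot> ((g \<cdot> b) \<cdot> iv b)" using assms aa by simp
  also have "\<dots> = iv a \<cdot> ((a \<cdot> f) \<cdot> iv b)" using assms(9) by simp
  also have "\<dots> = f \<cdot> iv b" using assms(1-8) aa by simp
  finally show ?thesis .
qed

lemma rsolve: assumes "iso b" "arr g" "dm g = cd b" "g \<cdot> b = k" shows "g = k \<cdot> iv b"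
proof -
  have ab: "arr b" using assms(1) iso_arr by auto
  have "g = g \<cdot> (b \<cdot> iv b)" using assms(1-3) ab by simp
  also have "\<dots> = (g \<cdot> b) \<cdot> iv b" using assms(1-3) ab by simp
  finally show ?thesis using assms(4) by simp
qed

definition dd where "dd x xs ev coev \<longleftrightarrow> x \<in> Ob \<and> xs \<in> Ob \<and> arr ev \<and> dm ev = xs \<odot> x \<and> cd ev = U \<and>
   arr coev \<and> dm coev = U \<and> cd coev = x \<odot> xs"

definition Tr where "Tr x xs coev y e = lu xs \<cdot> ((e \<otimes> idm xs) \<cdot> (iv (as y x xs) \<cdot> ((idm y \<otimes> coev) \<cdot> iv (ru y))))"
definition Phi where "Phi z y x e c = ru z \<cdot> ((idm z \<otimes> e) \<cdot> (as z y x \<cdot> ((c \<otimes> idm x) \<cdot> iv (lu x))))"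

lemma Phi_zz1: "Phi x y x e c = zz1e x y e c" unfolding Phi_def zz1e_def ..
lemma Tr_zz2: "Tr x xs coev xs ev = zz2e x xs ev coev" unfolding Tr_def zz2e_def ..

lemma Tr_typ: assumes "dd x xs ev coev" "y \<in> Ob" "arr e" "dm e = y \<odot> x" "cd e = U"
  shows "arr (Tr x xs coev y e)" "dm (Tr x xs coev y e) = y" "cd (Tr x xs coev y e) = xs"
  using assms unfolding dd_def Tr_def by auto

lemma TN: assumes "dd x xs ev coev" "arr p" "cd p = y" "arr e" "dm e = y \<odot> x" "cd e = U"
  shows "Tr x xs coev y e \<cdot> p = Tr x xs coev (dm p) (e \<cdot> (p \<otimes> idm x))"
proof -
  note [simp] = assms[unfolded dd_def]
  have yo[simp]: "y \<in> Ob" using assms(2,3) cd_ob by blast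
  have N1: "iv (ru y) \<cdot> p = (p \<otimes> idm U) \<cdot> iv (ru (dm p))"
    by (rule flip) (use ru_nat[of p] in auto)
  have N2: "(idm y \<otimes> coev) \<cdot> (p \<otimes> idm U) = (p \<otimes> idm (x \<odot> xs)) \<cdot> (idm (dm p) \<otimes> coev)"
    by (simp add: interchange)
  have N3: "iv (as y x xs) \<cdot> (p \<otimes> idm (x \<odot> xs)) = ((p \<otimes> idm x) \<otimes> idm xs) \<cdot> iv (as (dm p) x xs)"
    by (rule flip) (use as_nat[of p "idm x" "idm xs"] in auto)
  have N4: "(e \<otimes> idm xs) \<cdot> ((p \<otimes> idm x) \<otimes> idm xs) = (e \<cdot> (p \<otimes> idm x)) \<otimes> idm xs"
    by (simp add: interchange)
  show ?thesis unfolding Tr_def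
    by (simp add: N1 tl2[OF N2] tl2[OF N3] tl2[OF N4])
qed

lemma TE: assumes "dd x xs ev coev" "zz2e x xs ev coev = idm xs" "arr p" "cd p = xs"
  shows "Tr x xs coev (dm p) (ev \<cdot> (p \<otimes> idm x)) = p"
proof -
  have "Tr x xs coev (dm p) (ev \<cdot> (p \<otimes> idm x)) = Tr x xs coev xs ev \<cdot> p"
    using TN[OF assms(1,3,4)] assms(1) unfolding dd_def by simp
  also have "\<dots> = p" using assms unfolding Tr_zz2 dd_def by simp
  finally show ?thesis .
qed


lemma ET: assumes "dd x xs ev coev" "zz1e x xs ev coev = idm x" "y \<in> Ob" "arr e" "dm e = y \<odot> x" "cd e = U"
  shows "ev \<cdot> (Tr x xs coev y e \<otimes> idm x) = e"
proof -
  note [simp] = assms(3-6) assms(1)[unfolded dd_def]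
  define R where "R = (iv (as y x xs) \<otimes> idm x) \<cdot> (((idm y \<otimes> coev) \<otimes> idm x) \<cdot> (iv (ru y) \<otimes> idm x))"
  have R: "arr R" "dm R = y \<odot> x" "cd R = ((y \<odot> x) \<odot> xs) \<odot> x" unfolding R_def by auto
  have F1: "ev \<cdot> (lu xs \<otimes> idm x) = lu U \<cdot> ((idm U \<otimes> ev) \<cdot> as U xs x)"
  proof -
    have L: "lu U \<cdot> (idm U \<otimes> ev) = ev \<cdot> lu (xs \<odot> x)" using lu_nat[of ev] by simp
    show ?thesis by (simp add: tl2[OF L] K1)
  qed
  have F2: "as U xs x \<cdot> ((e \<otimes> idm xs) \<otimes> idm x) = (e \<otimes> idm (xs \<odot> x)) \<cdot> as (y \<odot> x) xs x"
    using as_nat[of e "idm xs" "idm x"] by simp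
  have F3: "(idm U \<otimes> ev) \<cdot> (e \<otimes> idm (xs \<odot> x)) = (e \<otimes> idm U) \<cdot> (idm (y \<odot> x) \<otimes> ev)"
    by (simp add: interchange)
  have F4: "lu U \<cdot> (e \<otimes> idm U) = e \<cdot> ru (y \<odot> x)" using ru_nat[of e] by (simp add: K2)
  have F5: "ru (y \<odot> x) = (idm y \<otimes> ru x) \<cdot> as y x U" using K3[of y x] by simp
  have F6: "as y x U \<cdot> (idm (y \<odot> x) \<otimes> ev) = (idm y \<otimes> (idm x \<otimes> ev)) \<cdot> as y x (xs \<odot> x)"
    using as_nat[of "idm y" "idm x" ev] by simp
  have F7: "as y x (xs \<odot> x) \<cdot> (as (y \<odot> x) xs x \<cdot> (iv (as y x xs) \<otimes> idm x)) = (idm y \<otimes> as x xs x) \<cdot> as y (x \<odot> xs) x"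
  proof -
    have P: "as y x (xs \<odot> x) \<cdot> as (y \<odot> x) xs x = (idm y \<otimes> as x xs x) \<cdot> (as y (x \<odot> xs) x \<cdot> (as y x xs \<otimes> idm x))"
      using pentagon[of y x xs x] by simp
    show ?thesis by (simp add: tl2[OF P])
  qed
  have F8: "as y (x \<odot> xs) x \<cdot> ((idm y \<otimes> coev) \<otimes> idm x) = (idm y \<otimes> (coev \<otimes> idm x)) \<cdot> as y U x"
    using as_nat[of "idm y" coev "idm x"] by simp
  have F9: "as y U x \<cdot> (iv (ru y) \<otimes> idm x) = idm y \<otimes> iv (lu x)"
  proof -
    have T: "(idm y \<otimes> lu x) \<cdot> as y U x = ru y \<otimes> idm x" using triangle[of y x] by simp
    have "as y U x \<cdot> (iv (ru y) \<otimes> idm x) = (idm y \<otimes> iv (lu x)) \<cdot> ((idm y \<otimes> lu x) \<cdot> (as y U x \<cdot> (iv (ru y) \<otimes> idm x)))"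
      by simp
    also have "\<dots> = idm y \<otimes> iv (lu x)" by (simp add: tl2[OF T])
    finally show ?thesis .
  qed
  have "ev \<cdot> (Tr x xs coev y e \<otimes> idm x) = ev \<cdot> ((lu xs \<otimes> idm x) \<cdot> (((e \<otimes> idm xs) \<otimes> idm x) \<cdot> R))"
    unfolding Tr_def R_def by (simp add: interchange)
  also have "\<dots> = lu U \<cdot> ((idm U \<otimes> ev) \<cdot> (as U xs x \<cdot> (((e \<otimes> idm xs) \<otimes> idm x) \<cdot> R)))"
    using R by (simp add: tl2[OF F1])
  also have "\<dots> = lu U \<cdot> ((e \<otimes> idm U) \<cdot> ((idm (y \<odot> x) \<otimes> ev) \<cdot> (as (y \<odot> x) xs x \<cdot> R)))"
    using R by (simp add: tl2[OF F2] tl2[OF F3])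
  also have "\<dots> = e \<cdot> ((idm y \<otimes> ru x) \<cdot> (as y x U \<cdot> ((idm (y \<odot> x) \<otimes> ev) \<cdot> (as (y \<odot> x) xs x \<cdot> R))))"
    using R by (simp add: tl2[OF F4] F5)
  also have "\<dots> = e \<cdot> ((idm y \<otimes> ru x) \<cdot> ((idm y \<otimes> (idm x \<otimes> ev)) \<cdot> ((idm y \<otimes> as x xs x) \<cdot> ((idm y \<otimes> (coev \<otimes> idm x)) \<cdot> (idm y \<otimes> iv (lu x))))))"
    unfolding R_def by (simp add: tl2[OF F6] tl3[OF F7] tl2[OF F8] F9)
  also have "\<dots> = e \<cdot> (idm y \<otimes> zz1e x xs ev coev)"
    unfolding zz1e_def by (simp add: interchange)
  also have "\<dots> = e" using assms(2) by simp
  finally show ?thesis .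
qed


lemma G: assumes "dd x xs ev coev" "z \<in> Ob" "y \<in> Ob" "arr e" "dm e = y \<odot> x" "cd e = U"
  "arr c" "dm c = U" "cd c = z \<odot> y"
  shows "(idm z \<otimes> Tr x xs coev y e) \<cdot> c = (Phi z y x e c \<otimes> idm xs) \<cdot> coev"
proof -
  note [simp] = assms(2-9) assms(1)[unfolded dd_def]
  have G0: "idm z \<otimes> Tr x xs coev y e = (idm z \<otimes> lu xs) \<cdot> ((idm z \<otimes> (e \<otimes> idm xs)) \<cdot> ((idm z \<otimes> iv (as y x xs))
     \<cdot> ((idm z \<otimes> (idm y \<otimes> coev)) \<cdot> (idm z \<otimes> iv (ru y)))))"
    unfolding Tr_def by (simp add: interchange)
  have G1: "(idm z \<otimes> iv (ru y)) \<cdot> c = as z y U \<cdot> ((c \<otimes> idm U) \<cdot> iv (ru U))"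
  proof -
    have a: "iv (idm z \<otimes> ru y) \<cdot> idm (z \<odot> y) = as z y U \<cdot> iv (ru (z \<odot> y))"
      by (rule flip) (use K3[of z y] in auto)
    have b: "iv (ru (z \<odot> y)) \<cdot> c = (c \<otimes> idm U) \<cdot> iv (ru U)"
      by (rule flip) (use ru_nat[of c] in auto)
    have "idm z \<otimes> iv (ru y) = as z y U \<cdot> iv (ru (z \<odot> y))" using a by (simp add: iv_tm)
    then show ?thesis using b by simp
  qed
  have G2: "(idm z \<otimes> (idm y \<otimes> coev)) \<cdot> as z y U = as z y (x \<odot> xs) \<cdot> (idm (z \<odot> y) \<otimes> coev)"
    using as_nat[of "idm z" "idm y" coev] by simp
  have G3: "(idm z \<otimes> iv (as y x xs)) \<cdot> as z y (x \<odot> xs) = as z (y \<odot> x) xs \<cdot> ((as z y x \<otimes> idm xs) \<cdot> iv (as (z \<odot> y) x xs))"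
  proof -
    have P: "as z y (x \<odot> xs) \<cdot> as (z \<odot> y) x xs = (idm z \<otimes> as y x xs) \<cdot> (as z (y \<odot> x) xs \<cdot> (as z y x \<otimes> idm xs))"
      using pentagon[of z y x xs] by simp
    have P': "as z y (x \<odot> xs) = ((idm z \<otimes> as y x xs) \<cdot> (as z (y \<odot> x) xs \<cdot> (as z y x \<otimes> idm xs))) \<cdot> iv (as (z \<odot> y) x xs)"
      by (rule rsolve) (use P in auto)
    show ?thesis by (subst P') simp
  qed
  have G4: "(idm z \<otimes> (e \<otimes> idm xs)) \<cdot> as z (y \<odot> x) xs = as z U xs \<cdot> ((idm z \<otimes> e) \<otimes> idm xs)"
    using as_nat[of "idm z" e "idm xs"] by simp
  have G5: "(idm z \<otimes> lu xs) \<cdot> as z U xs = ru z \<otimes> idm xs" using triangle[of z xs] by simp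
  have G6: "(idm (z \<odot> y) \<otimes> coev) \<cdot> (c \<otimes> idm U) = (c \<otimes> idm (x \<odot> xs)) \<cdot> (idm U \<otimes> coev)"
    by (simp add: interchange)
  have G7: "iv (as (z \<odot> y) x xs) \<cdot> (c \<otimes> idm (x \<odot> xs)) = ((c \<otimes> idm x) \<otimes> idm xs) \<cdot> iv (as U x xs)"
    by (rule flip) (use as_nat[of c "idm x" "idm xs"] in auto)
  have G8: "(idm U \<otimes> coev) \<cdot> iv (ru U) = iv (lu (x \<odot> xs)) \<cdot> coev"
  proof -
    have "iv (lu (x \<odot> xs)) \<cdot> coev = (idm U \<otimes> coev) \<cdot> iv (lu U)"
      by (rule flip) (use lu_nat[of coev] in auto)
    then show ?thesis by (simp add: K2)
  qed
  have G9: "iv (as U x xs) \<cdot> iv (lu (x \<odot> xs)) = iv (lu x) \<otimes> idm xs"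
  proof -
    have "iv (as U x xs) \<cdot> iv (lu (x \<odot> xs)) = iv (lu (x \<odot> xs) \<cdot> as U x xs)" by (simp add: iv_comp)
    also have "\<dots> = iv (lu x) \<otimes> idm xs" by (simp add: K1 iv_tm)
    finally show ?thesis .
  qed
  have "(idm z \<otimes> Tr x xs coev y e) \<cdot> c = (ru z \<otimes> idm xs) \<cdot> (((idm z \<otimes> e) \<otimes> idm xs) \<cdot> ((as z y x \<otimes> idm xs) \<cdot>
      (iv (as (z \<odot> y) x xs) \<cdot> ((idm (z \<odot> y) \<otimes> coev) \<cdot> ((c \<otimes> idm U) \<cdot> iv (ru U))))))"
    unfolding G0 by (simp add: G1 tl2[OF G2] tl2[OF G3] tl2[OF G4] tl2[OF G5])
  also have "\<dots> = (ru z \<otimes> idm xs) \<cdot> (((idm z \<otimes> e) \<otimes> idm xs) \<cdot> ((as z y x \<otimes> idm xs) \<cdot>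
      (((c \<otimes> idm x) \<otimes> idm xs) \<cdot> ((iv (lu x) \<otimes> idm xs) \<cdot> coev))))"
    by (simp add: tl2[OF G6] tl2[OF G7] G8 tl2[OF G9])
  also have "\<dots> = (Phi z y x e c \<otimes> idm xs) \<cdot> coev"
    unfolding Phi_def by (simp add: interchange tl2[OF interchange])
  finally show ?thesis .
qed

lemma Transport: assumes "dd x xs1 ev1 coev1" "dd x xs2 ev2 coev2" "arr p" "dm p = xs1" "cd p = xs2"
  "(idm x \<otimes> p) \<cdot> coev1 = coev2" "y \<in> Ob" "arr e" "dm e = y \<odot> x" "cd e = U"
  shows "p \<cdot> Tr x xs1 coev1 y e = Tr x xs2 coev2 y e"
proof -
  note [simp] = assms(3-5,7-10) assms(1)[unfolded dd_def] assms(2)[unfolded dd_def]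
  have T1: "p \<cdot> lu xs1 = lu xs2 \<cdot> (idm U \<otimes> p)" using lu_nat[of p] by simp
  have T2: "(idm U \<otimes> p) \<cdot> (e \<otimes> idm xs1) = (e \<otimes> idm xs2) \<cdot> (idm (y \<odot> x) \<otimes> p)" by (simp add: interchange)
  have T3: "(idm (y \<odot> x) \<otimes> p) \<cdot> iv (as y x xs1) = iv (as y x xs2) \<cdot> (idm y \<otimes> (idm x \<otimes> p))"
    by (rule flip[symmetric]) (use as_nat[of "idm y" "idm x" p] in auto)
  have T4: "(idm y \<otimes> (idm x \<otimes> p)) \<cdot> (idm y \<otimes> coev1) = idm y \<otimes> coev2"
    using assms(6) by (simp add: interchange)
  show ?thesis unfolding Tr_def by (simp add: tl2[OF T1] tl2[OF T2] tl2[OF T3] tl2[OF T4])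
qed

end

lemma op_simps[simp]: "mc_obj (mc_op C) = mc_obj C" "mc_arr (mc_op C) = mc_arr C"
  "mc_dom (mc_op C) = mc_cod C" "mc_cod (mc_op C) = mc_dom C" "mc_cmp (mc_op C) g f = mc_cmp C f g"
  "mc_id (mc_op C) = mc_id C" "mc_tens (mc_op C) = mc_tens C" "mc_tensm (mc_op C) = mc_tensm C"
  "mc_unit (mc_op C) = mc_unit C" "mc_assoc (mc_op C) a b c = mc_inv C (mc_assoc C a b c)"
  "mc_lunit (mc_op C) a = mc_inv C (mc_lunit C a)" "mc_runit (mc_op C) a = mc_inv C (mc_runit C a)"
  "mc_braid (mc_op C) a b = mc_braid C b a"
  by (simp_all add: mc_op_def)

lemma op_hom[simp]: "mc_hom (mc_op C) a b = mc_hom C b a" unfolding mc_hom_def by auto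
lemma op_iso[simp]: "mc_iso (mc_op C) f = mc_iso C f" unfolding mc_iso_def by auto

locale aic = smc C for C :: "('o, 'm, 'x) mcat_scheme" +
  fixes d0 :: "'o \<Rightarrow> 'o" and d1 :: "'m \<Rightarrow> 'm" and dmu :: "'o \<Rightarrow> 'o \<Rightarrow> 'm" and deps :: "'m" and eta :: "'o \<Rightarrow> 'm"
  assumes AIC: "anti_involutive_category C d0 d1 dmu deps eta"
begin

abbreviation Do where "Do \<equiv> d0"
abbreviation D where "D \<equiv> d1"
abbreviation mu where "mu \<equiv> dmu"
abbreviation ep where "ep \<equiv> deps"

lemma SMF: "sym_monoidal_functor C (mc_op C) d0 d1 dmu deps"
  using AIC unfolding anti_involutive_category_def by auto
lemma FUN: "mc_functor C (mc_op C) d0 d1" using SMF unfolding sym_monoidal_functor_def by auto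

lemma Do_ob[simp]: "a \<in> Ob \<Longrightarrow> Do a \<in> Ob" using FUN unfolding mc_functor_def by auto
lemma D_h: "arr f \<Longrightarrow> arr (D f) \<and> dm (D f) = Do (cd f) \<and> cd (D f) = Do (dm f)"
  using FUN unfolding mc_functor_def mc_hom_def by auto
lemma arr_D[simp]: "arr f \<Longrightarrow> arr (D f)" and dm_D[simp]: "arr f \<Longrightarrow> dm (D f) = Do (cd f)"
  and cd_D[simp]: "arr f \<Longrightarrow> cd (D f) = Do (dm f)" using D_h by auto
lemma D_id[simp]: "a \<in> Ob \<Longrightarrow> D (idm a) = idm (Do a)" using FUN unfolding mc_functor_def by auto
lemma D_comp: "arr f \<Longrightarrow> arr g \<Longrightarrow> dm g = cd f \<Longrightarrow> D (g \<cdot> f) = D f \<cdot> D g"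
  using FUN unfolding mc_functor_def by auto

lemma ep_h: "arr ep \<and> dm ep = Do U \<and> cd ep = U \<and> iso ep"
  using SMF unfolding sym_monoidal_functor_def mc_hom_def by auto
lemma arr_ep[simp]: "arr ep" and dm_ep[simp]: "dm ep = Do U" and cd_ep[simp]: "cd ep = U"
  and iso_ep[simp]: "iso ep" using ep_h by auto

lemma mu_h: "a \<in> Ob \<Longrightarrow> b \<in> Ob \<Longrightarrow> arr (mu a b) \<and> dm (mu a b) = Do (a \<odot> b) \<and> cd (mu a b) = Do a \<odot> Do b \<and> iso (mu a b)"
  using SMF unfolding sym_monoidal_functor_def mc_hom_def by auto
lemma arr_mu[simp]: "a \<in> Ob \<Longrightarrow> b \<in> Ob \<Longrightarrow> arr (mu a b)"
  and dm_mu[simp]: "a \<in> Ob \<Longrightarrow> b \<in> Ob \<Longrightarrow> dm (mu a b) = Do (a \<odot> b)"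
  and cd_mu[simp]: "a \<in> Ob \<Longrightarrow> b \<in> Ob \<Longrightarrow> cd (mu a b) = Do a \<odot> Do b"
  and iso_mu[simp]: "a \<in> Ob \<Longrightarrow> b \<in> Ob \<Longrightarrow> iso (mu a b)" using mu_h by auto

lemma mu_nat: "arr f \<Longrightarrow> arr g \<Longrightarrow> mu (dm f) (dm g) \<cdot> D (f \<otimes> g) = (D f \<otimes> D g) \<cdot> mu (cd f) (cd g)"
  using SMF unfolding sym_monoidal_functor_def by auto
lemma mu_as: "a \<in> Ob \<Longrightarrow> b \<in> Ob \<Longrightarrow> c \<in> Ob \<Longrightarrow>
  ((mu a b \<otimes> idm (Do c)) \<cdot> mu (a \<odot> b) c) \<cdot> D (as a b c) = (iv (as (Do a) (Do b) (Do c)) \<cdot> (idm (Do a) \<otimes> mu b c)) \<cdot> mu a (b \<odot> c)"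
  using SMF unfolding sym_monoidal_functor_def by auto
lemma mu_lu: "a \<in> Ob \<Longrightarrow> ((ep \<otimes> idm (Do a)) \<cdot> mu U a) \<cdot> D (lu a) = iv (lu (Do a))"
  using SMF unfolding sym_monoidal_functor_def by auto
lemma mu_ru: "a \<in> Ob \<Longrightarrow> ((idm (Do a) \<otimes> ep) \<cdot> mu a U) \<cdot> D (ru a) = iv (ru (Do a))"
  using SMF unfolding sym_monoidal_functor_def by auto
lemma mu_br: "a \<in> Ob \<Longrightarrow> b \<in> Ob \<Longrightarrow> mu a b \<cdot> D (br a b) = br (Do b) (Do a) \<cdot> mu b a"
  using SMF unfolding sym_monoidal_functor_def by auto

lemma eta_h: "a \<in> Ob \<Longrightarrow> arr (eta a) \<and> dm (eta a) = a \<and> cd (eta a) = Do (Do a) \<and> iso (eta a)"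
  using AIC unfolding anti_involutive_category_def mc_hom_def by auto
lemma arr_eta[simp]: "a \<in> Ob \<Longrightarrow> arr (eta a)" and dm_eta[simp]: "a \<in> Ob \<Longrightarrow> dm (eta a) = a"
  and cd_eta[simp]: "a \<in> Ob \<Longrightarrow> cd (eta a) = Do (Do a)" and iso_eta[simp]: "a \<in> Ob \<Longrightarrow> iso (eta a)"
  using eta_h by auto
lemma eta_nat: "arr f \<Longrightarrow> eta (cd f) \<cdot> f = D (D f) \<cdot> eta (dm f)"
  using AIC unfolding anti_involutive_category_def by auto
lemma eta_tens: "a \<in> Ob \<Longrightarrow> b \<in> Ob \<Longrightarrow> eta (a \<odot> b) = (D (mu a b) \<cdot> iv (mu (Do a) (Do b))) \<cdot> (eta a \<otimes> eta b)"
  using AIC unfolding anti_involutive_category_def by auto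
lemma eta_U: "eta U = D ep \<cdot> iv ep"
  using AIC unfolding anti_involutive_category_def by auto

lemma iso_D[simp]: "iso f \<Longrightarrow> iso (D f)"
  by (rule isoI[where g="D (iv f)"]) (auto simp: iso_arr D_comp[symmetric])
lemma iv_D: "iso f \<Longrightarrow> iv (D f) = D (iv f)"
  by (rule iv_unique) (auto simp: iso_arr D_comp[symmetric])


lemma lsolve: assumes "iso b" "arr g" "cd g = dm b" "b \<cdot> g = k" shows "g = iv b \<cdot> k"
proof -
  have ab: "arr b" using assms(1) iso_arr by auto
  have "g = iv b \<cdot> (b \<cdot> g)" using assms(1-3) ab by simp
  then show ?thesis using assms(4) by simp
qed

lemma D_iv_lu: assumes "a \<in> Ob" shows "D (iv (lu a)) = lu (Do a) \<cdot> ((ep \<otimes> idm (Do a)) \<cdot> mu U a)"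
proof -
  note [simp] = assms
  have "D (lu a) = iv ((ep \<otimes> idm (Do a)) \<cdot> mu U a) \<cdot> iv (lu (Do a))"
    by (rule lsolve) (use mu_lu[of a] in auto)
  then have "iv (D (lu a)) = lu (Do a) \<cdot> ((ep \<otimes> idm (Do a)) \<cdot> mu U a)"
    by (simp add: iv_comp)
  then show ?thesis by (simp add: iv_D)
qed
lemma D_lu: assumes "a \<in> Ob" shows "D (lu a) = iv (mu U a) \<cdot> ((iv ep \<otimes> idm (Do a)) \<cdot> iv (lu (Do a)))"
proof -
  note [simp] = assms
  have "D (lu a) = iv ((ep \<otimes> idm (Do a)) \<cdot> mu U a) \<cdot> iv (lu (Do a))"
    by (rule lsolve) (use mu_lu[of a] in auto)
  then show ?thesis by (simp add: iv_comp iv_tm)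
qed
lemma D_iv_ru: assumes "a \<in> Ob" shows "D (iv (ru a)) = ru (Do a) \<cdot> ((idm (Do a) \<otimes> ep) \<cdot> mu a U)"
proof -
  note [simp] = assms
  have "D (ru a) = iv ((idm (Do a) \<otimes> ep) \<cdot> mu a U) \<cdot> iv (ru (Do a))"
    by (rule lsolve) (use mu_ru[of a] in auto)
  then have "iv (D (ru a)) = ru (Do a) \<cdot> ((idm (Do a) \<otimes> ep) \<cdot> mu a U)"
    by (simp add: iv_comp)
  then show ?thesis by (simp add: iv_D)
qed
lemma D_ru: assumes "a \<in> Ob" shows "D (ru a) = iv (mu a U) \<cdot> ((idm (Do a) \<otimes> iv ep) \<cdot> iv (ru (Do a)))"
proof -
  note [simp] = assms
  have "D (ru a) = iv ((idm (Do a) \<otimes> ep) \<cdot> mu a U) \<cdot> iv (ru (Do a))"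
    by (rule lsolve) (use mu_ru[of a] in auto)
  then show ?thesis by (simp add: iv_comp iv_tm)
qed
lemma D_as: assumes "a \<in> Ob" "b \<in> Ob" "c \<in> Ob"
  shows "D (as a b c) = iv (mu (a \<odot> b) c) \<cdot> ((iv (mu a b) \<otimes> idm (Do c)) \<cdot> (iv (as (Do a) (Do b) (Do c)) \<cdot> ((idm (Do a) \<otimes> mu b c) \<cdot> mu a (b \<odot> c))))"
proof -
  note [simp] = assms
  have "D (as a b c) = iv ((mu a b \<otimes> idm (Do c)) \<cdot> mu (a \<odot> b) c) \<cdot> ((iv (as (Do a) (Do b) (Do c)) \<cdot> (idm (Do a) \<otimes> mu b c)) \<cdot> mu a (b \<odot> c))"
    by (rule lsolve) (use mu_as[of a b c] in auto)
  then show ?thesis by (simp add: iv_comp iv_tm)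
qed
lemma D_iv_as: assumes "a \<in> Ob" "b \<in> Ob" "c \<in> Ob"
  shows "D (iv (as a b c)) = iv (mu a (b \<odot> c)) \<cdot> ((idm (Do a) \<otimes> iv (mu b c)) \<cdot> (as (Do a) (Do b) (Do c) \<cdot> ((mu a b \<otimes> idm (Do c)) \<cdot> mu (a \<odot> b) c)))"
proof -
  note [simp] = assms
  have "D (iv (as a b c)) = iv (D (as a b c))" by (simp add: iv_D)
  also have "\<dots> = iv (mu a (b \<odot> c)) \<cdot> ((idm (Do a) \<otimes> iv (mu b c)) \<cdot> (as (Do a) (Do b) (Do c) \<cdot> ((mu a b \<otimes> idm (Do c)) \<cdot> mu (a \<odot> b) c)))"
    unfolding D_as[OF assms] by (simp add: iv_comp iv_tm)
  finally show ?thesis .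
qed

lemma mu_nat_iv: assumes "arr f" "arr g" shows "D (f \<otimes> g) \<cdot> iv (mu (cd f) (cd g)) = iv (mu (dm f) (dm g)) \<cdot> (D f \<otimes> D g)"
  by (rule flip[symmetric]) (use mu_nat[OF assms] assms in auto)

lemma DZ1: assumes "x \<in> Ob" "y \<in> Ob" "arr e" "dm e = y \<odot> x" "cd e = U" "arr c" "dm c = U" "cd c = x \<odot> y"
  shows "D (zz1e x y e c) = zz2e (Do y) (Do x) (ep \<cdot> (D c \<cdot> iv (mu x y))) (mu y x \<cdot> (D e \<cdot> iv ep))"
proof -
  note [simp] = assms
  have R2: "D (idm x \<otimes> e) \<cdot> iv (mu x U) = iv (mu x (y \<odot> x)) \<cdot> (idm (Do x) \<otimes> D e)"
    using mu_nat_iv[of "idm x" e] by simp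
  have R4: "D (c \<otimes> idm x) \<cdot> iv (mu (x \<odot> y) x) = iv (mu U x) \<cdot> (D c \<otimes> idm (Do x))"
    using mu_nat_iv[of c "idm x"] by simp
  have "D (zz1e x y e c) = D (iv (lu x)) \<cdot> (D (c \<otimes> idm x) \<cdot> (D (as x y x) \<cdot> (D (idm x \<otimes> e) \<cdot> D (ru x))))"
    unfolding zz1e_def by (simp add: D_comp)
  also have "\<dots> = lu (Do x) \<cdot> ((ep \<otimes> idm (Do x)) \<cdot> ((D c \<otimes> idm (Do x)) \<cdot> ((iv (mu x y) \<otimes> idm (Do x)) \<cdot>
      (iv (as (Do x) (Do y) (Do x)) \<cdot> ((idm (Do x) \<otimes> mu y x) \<cdot> ((idm (Do x) \<otimes> D e) \<cdot> ((idm (Do x) \<otimes> iv ep) \<cdot> iv (ru (Do x)))))))))"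
    by (simp add: D_ru D_as D_iv_lu tl2[OF R2] tl2[OF R4])
  also have "\<dots> = zz2e (Do y) (Do x) (ep \<cdot> (D c \<cdot> iv (mu x y))) (mu y x \<cdot> (D e \<cdot> iv ep))"
    unfolding zz2e_def by (simp add: interchange tl2[OF interchange])
  finally show ?thesis .
qed

lemma DZ2: assumes "x \<in> Ob" "y \<in> Ob" "arr e" "dm e = y \<odot> x" "cd e = U" "arr c" "dm c = U" "cd c = x \<odot> y"
  shows "D (zz2e x y e c) = zz1e (Do y) (Do x) (ep \<cdot> (D c \<cdot> iv (mu x y))) (mu y x \<cdot> (D e \<cdot> iv ep))"
proof -
  note [simp] = assms
  have Q2: "D (e \<otimes> idm y) \<cdot> iv (mu U y) = iv (mu (y \<odot> x) y) \<cdot> (D e \<otimes> idm (Do y))"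
    using mu_nat_iv[of e "idm y"] by simp
  have Q4: "D (idm y \<otimes> c) \<cdot> iv (mu y (x \<odot> y)) = iv (mu y U) \<cdot> (idm (Do y) \<otimes> D c)"
    using mu_nat_iv[of "idm y" c] by simp
  have "D (zz2e x y e c) = D (iv (ru y)) \<cdot> (D (idm y \<otimes> c) \<cdot> (D (iv (as y x y)) \<cdot> (D (e \<otimes> idm y) \<cdot> D (lu y))))"
    unfolding zz2e_def by (simp add: D_comp)
  also have "\<dots> = ru (Do y) \<cdot> ((idm (Do y) \<otimes> ep) \<cdot> ((idm (Do y) \<otimes> D c) \<cdot> ((idm (Do y) \<otimes> iv (mu x y)) \<cdot>
      (as (Do y) (Do x) (Do y) \<cdot> ((mu y x \<otimes> idm (Do y)) \<cdot> ((D e \<otimes> idm (Do y)) \<cdot> ((iv ep \<otimes> idm (Do y)) \<cdot> iv (lu (Do y)))))))))"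
    by (simp add: D_lu D_iv_as D_iv_ru tl2[OF Q2] tl2[OF Q4])
  also have "\<dots> = zz1e (Do y) (Do x) (ep \<cdot> (D c \<cdot> iv (mu x y))) (mu y x \<cdot> (D e \<cdot> iv ep))"
    unfolding zz1e_def by (simp add: interchange tl2[OF interchange])
  finally show ?thesis .
qed

end

locale aicd = aic C d0 d1 dmu deps eta for C :: "('o, 'm, 'x) mcat_scheme" and d0 d1 dmu deps eta +
  fixes dual :: "'o \<Rightarrow> 'o" and ev coev :: "'o \<Rightarrow> 'm"
  assumes DC: "dual_choice C dual ev coev"
begin

lemma dual_ob[simp]: "a \<in> Ob \<Longrightarrow> dual a \<in> Ob" using DC unfolding dual_choice_def by auto
lemma ev_h: "a \<in> Ob \<Longrightarrow> arr (ev a) \<and> dm (ev a) = dual a \<odot> a \<and> cd (ev a) = U"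
  using DC unfolding dual_choice_def mc_hom_def by auto
lemma coev_h: "a \<in> Ob \<Longrightarrow> arr (coev a) \<and> dm (coev a) = U \<and> cd (coev a) = a \<odot> dual a"
  using DC unfolding dual_choice_def mc_hom_def by auto
lemma arr_ev[simp]: "a \<in> Ob \<Longrightarrow> arr (ev a)" and dm_ev[simp]: "a \<in> Ob \<Longrightarrow> dm (ev a) = dual a \<odot> a"
  and cd_ev[simp]: "a \<in> Ob \<Longrightarrow> cd (ev a) = U" using ev_h by auto
lemma arr_coev[simp]: "a \<in> Ob \<Longrightarrow> arr (coev a)" and dm_coev[simp]: "a \<in> Ob \<Longrightarrow> dm (coev a) = U"
  and cd_coev[simp]: "a \<in> Ob \<Longrightarrow> cd (coev a) = a \<odot> dual a" using coev_h by auto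
lemma zz1[simp]: "a \<in> Ob \<Longrightarrow> zz1e a (dual a) (ev a) (coev a) = idm a"
  using DC unfolding dual_choice_def zz1e_def by auto
lemma zz2[simp]: "a \<in> Ob \<Longrightarrow> zz2e a (dual a) (ev a) (coev a) = idm (dual a)"
  using DC unfolding dual_choice_def zz2e_def by auto
lemma dd0[simp]: "a \<in> Ob \<Longrightarrow> dd a (dual a) (ev a) (coev a)" unfolding dd_def by auto

abbreviation dev where "dev a \<equiv> d_ev C d0 d1 dmu deps dual coev a"
abbreviation dcoev where "dcoev a \<equiv> d_coev C d0 d1 dmu deps dual ev a"
abbreviation phi where "phi a \<equiv> canon_iso C d0 d1 dmu deps dual ev coev a"

definition e1 where "e1 a = ep \<cdot> (D (coev a) \<cdot> iv (mu a (dual a)))"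
definition c1 where "c1 a = mu (dual a) a \<cdot> (D (ev a) \<cdot> iv ep)"

lemma e1_h[simp]: "a \<in> Ob \<Longrightarrow> arr (e1 a)" "a \<in> Ob \<Longrightarrow> dm (e1 a) = Do a \<odot> Do (dual a)" "a \<in> Ob \<Longrightarrow> cd (e1 a) = U"
  unfolding e1_def by auto
lemma c1_h[simp]: "a \<in> Ob \<Longrightarrow> arr (c1 a)" "a \<in> Ob \<Longrightarrow> dm (c1 a) = U" "a \<in> Ob \<Longrightarrow> cd (c1 a) = Do (dual a) \<odot> Do a"
  unfolding c1_def by auto

lemma dev_eq: "a \<in> Ob \<Longrightarrow> dev a = e1 a \<cdot> br (Do (dual a)) (Do a)"
  unfolding d_ev_def e1_def by simp
lemma dcoev_eq: "a \<in> Ob \<Longrightarrow> dcoev a = br (Do (dual a)) (Do a) \<cdot> c1 a"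
  unfolding d_coev_def c1_def by simp

lemma dev_h[simp]: "a \<in> Ob \<Longrightarrow> arr (dev a)" "a \<in> Ob \<Longrightarrow> dm (dev a) = Do (dual a) \<odot> Do a" "a \<in> Ob \<Longrightarrow> cd (dev a) = U"
  by (auto simp: dev_eq)
lemma dcoev_h[simp]: "a \<in> Ob \<Longrightarrow> arr (dcoev a)" "a \<in> Ob \<Longrightarrow> dm (dcoev a) = U" "a \<in> Ob \<Longrightarrow> cd (dcoev a) = Do a \<odot> Do (dual a)"
  by (auto simp: dcoev_eq)

lemma ddd[simp]: "a \<in> Ob \<Longrightarrow> dd (Do a) (Do (dual a)) (dev a) (dcoev a)" unfolding dd_def by auto

lemma dzz1[simp]: assumes "a \<in> Ob" shows "zz1e (Do a) (Do (dual a)) (dev a) (dcoev a) = idm (Do a)"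
proof -
  note [simp] = assms
  have "idm (Do a) = D (zz1e a (dual a) (ev a) (coev a))" by simp
  also have "\<dots> = zz2e (Do (dual a)) (Do a) (e1 a) (c1 a)" unfolding e1_def c1_def by (rule DZ1) auto
  also have "\<dots> = zz1e (Do a) (Do (dual a)) (e1 a \<cdot> br (Do (dual a)) (Do a)) (br (Do (dual a)) (Do a) \<cdot> c1 a)"
    by (rule Sw[symmetric]) auto
  finally show ?thesis by (simp add: dev_eq dcoev_eq)
qed

lemma dzz2[simp]: assumes "a \<in> Ob" shows "zz2e (Do a) (Do (dual a)) (dev a) (dcoev a) = idm (Do (dual a))"
proof -
  note [simp] = assms
  have "idm (Do (dual a)) = D (zz2e a (dual a) (ev a) (coev a))" by simp
  also have "\<dots> = zz1e (Do (dual a)) (Do a) (e1 a) (c1 a)" unfolding e1_def c1_def by (rule DZ2) auto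
  also have "\<dots> = zz1e (Do (dual a)) (Do a) (dev a \<cdot> br (Do a) (Do (dual a))) (br (Do a) (Do (dual a)) \<cdot> dcoev a)"
    by (simp add: dev_eq dcoev_eq)
  also have "\<dots> = zz2e (Do a) (Do (dual a)) (dev a) (dcoev a)"
    by (rule Sw) auto
  finally show ?thesis by simp
qed

definition P where "P a = Tr (Do a) (dual (Do a)) (coev (Do a)) (Do (dual a)) (dev a)"

lemma P_h[simp]: "a \<in> Ob \<Longrightarrow> arr (P a)" "a \<in> Ob \<Longrightarrow> dm (P a) = Do (dual a)" "a \<in> Ob \<Longrightarrow> cd (P a) = dual (Do a)"
  unfolding P_def by (auto intro: Tr_typ[OF dd0])

lemma P_ev: "a \<in> Ob \<Longrightarrow> ev (Do a) \<cdot> (P a \<otimes> idm (Do a)) = dev a"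
  unfolding P_def by (rule ET) auto

lemma P_coev: assumes "a \<in> Ob" shows "(idm (Do a) \<otimes> P a) \<cdot> dcoev a = coev (Do a)"
proof -
  note [simp] = assms
  have "(idm (Do a) \<otimes> P a) \<cdot> dcoev a = (Phi (Do a) (Do (dual a)) (Do a) (dev a) (dcoev a) \<otimes> idm (dual (Do a))) \<cdot> coev (Do a)"
    unfolding P_def by (rule G[where ev="ev (Do a)"]) auto
  also have "\<dots> = coev (Do a)" by (simp add: Phi_zz1)
  finally show ?thesis .
qed

lemma phi_eq: assumes "a \<in> Ob" shows "phi a = P a"
  unfolding canon_iso_def
proof (rule the_equality)
  show "P a \<in> mc_hom C (Do (dual a)) (dual (Do a)) \<and> ev (Do a) \<cdot> (P a \<otimes> idm (Do a)) = dev a \<and>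
    (idm (Do a) \<otimes> P a) \<cdot> dcoev a = coev (Do a)"
    using assms P_ev P_coev unfolding mc_hom_def by auto
next
  fix p assume p: "p \<in> mc_hom C (Do (dual a)) (dual (Do a)) \<and> ev (Do a) \<cdot> (p \<otimes> idm (Do a)) = dev a \<and>
    (idm (Do a) \<otimes> p) \<cdot> dcoev a = coev (Do a)"
  then have h: "arr p" "dm p = Do (dual a)" "cd p = dual (Do a)" unfolding mc_hom_def by auto
  have "p = Tr (Do a) (dual (Do a)) (coev (Do a)) (dm p) (ev (Do a) \<cdot> (p \<otimes> idm (Do a)))"
    by (rule TE[symmetric]) (use assms h in auto)
  then show "p = P a" using p h unfolding P_def by simp
qed

lemma P_iso: assumes "a \<in> Ob" shows "iso (P a)"
proof -
  note [simp] = assms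
  define q where "q = Tr (Do a) (Do (dual a)) (dcoev a) (dual (Do a)) (ev (Do a))"
  have q: "arr q" "dm q = dual (Do a)" "cd q = Do (dual a)" unfolding q_def by (auto intro: Tr_typ[OF ddd])
  have 1: "P a \<cdot> q = idm (dual (Do a))"
  proof -
    have "P a \<cdot> q = Tr (Do a) (dual (Do a)) (coev (Do a)) (dual (Do a)) (ev (Do a))"
      unfolding q_def by (rule Transport[of "Do a" "Do (dual a)" "dev a" "dcoev a" "dual (Do a)" "ev (Do a)" "coev (Do a)"]) (auto simp: P_coev)
    then show ?thesis by (simp add: Tr_zz2)
  qed
  have 2: "q \<cdot> P a = idm (Do (dual a))"
  proof -
    have "q \<cdot> P a = Tr (Do a) (Do (dual a)) (dcoev a) (Do (dual a)) (ev (Do a) \<cdot> (P a \<otimes> idm (Do a)))"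
      unfolding q_def using TN[OF ddd[OF assms], of "P a" "dual (Do a)" "ev (Do a)"] by simp
    also have "\<dots> = idm (Do (dual a))" by (simp add: P_ev Tr_zz2)
    finally show ?thesis .
  qed
  show ?thesis by (rule isoI[where g=q]) (use q 1 2 in auto)
qed

end

context aicd begin

definition Fs where "Fs f = Tr (dm f) (dual (dm f)) (coev (dm f)) (dual (cd f)) (ev (cd f) \<cdot> (idm (dual (cd f)) \<otimes> f))"

lemma Fs_h[simp]: "arr f \<Longrightarrow> arr (Fs f)" "arr f \<Longrightarrow> dm (Fs f) = dual (cd f)" "arr f \<Longrightarrow> cd (Fs f) = dual (dm f)"
  unfolding Fs_def by (auto intro: Tr_typ[OF dd0])

lemma Fs_ev: "arr f \<Longrightarrow> ev (dm f) \<cdot> (Fs f \<otimes> idm (dm f)) = ev (cd f) \<cdot> (idm (dual (cd f)) \<otimes> f)"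
  unfolding Fs_def by (rule ET) auto

lemma Fs_unique: assumes "arr f" "arr p" "dm p = dual (cd f)" "cd p = dual (dm f)"
  "ev (dm f) \<cdot> (p \<otimes> idm (dm f)) = ev (cd f) \<cdot> (idm (dual (cd f)) \<otimes> f)"
  shows "p = Fs f"
proof -
  have "p = Tr (dm f) (dual (dm f)) (coev (dm f)) (dm p) (ev (dm f) \<cdot> (p \<otimes> idm (dm f)))"
    by (rule TE[symmetric]) (use assms in auto)
  then show ?thesis using assms unfolding Fs_def by simp
qed

lemma dual_mor_eq: assumes "arr f" shows "dual_mor C dual ev f = Fs f"
  unfolding dual_mor_def
proof (rule the_equality)
  show "Fs f \<in> mc_hom C (dual (cd f)) (dual (dm f)) \<and>
    ev (dm f) \<cdot> (Fs f \<otimes> idm (dm f)) = ev (cd f) \<cdot> (idm (dual (cd f)) \<otimes> f)"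
    using assms Fs_ev unfolding mc_hom_def by auto
next
  fix g assume "g \<in> mc_hom C (dual (cd f)) (dual (dm f)) \<and>
    ev (dm f) \<cdot> (g \<otimes> idm (dm f)) = ev (cd f) \<cdot> (idm (dual (cd f)) \<otimes> f)"
  then show "g = Fs f" using Fs_unique[OF assms, of g] unfolding mc_hom_def by auto
qed

lemma Fs_id: "a \<in> Ob \<Longrightarrow> Fs (idm a) = idm (dual a)"
  by (rule Fs_unique[symmetric]) auto

lemma Fs_comp: assumes "arr f" "arr g" "dm g = cd f" shows "Fs (g \<cdot> f) = Fs f \<cdot> Fs g"
proof (rule Fs_unique[symmetric])
  note [simp] = assms
  have 1: "ev (dm f) \<cdot> (Fs f \<otimes> idm (dm f)) = ev (cd f) \<cdot> (idm (dual (cd f)) \<otimes> f)" by (rule Fs_ev) simp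
  have 2: "ev (cd f) \<cdot> (Fs g \<otimes> idm (cd f)) = ev (cd g) \<cdot> (idm (dual (cd g)) \<otimes> g)" using Fs_ev[of g] by simp
  have 3: "(idm (dual (cd f)) \<otimes> f) \<cdot> (Fs g \<otimes> idm (dm f)) = (Fs g \<otimes> idm (cd f)) \<cdot> (idm (dual (cd g)) \<otimes> f)"
    by (simp add: interchange)
  have "ev (dm f) \<cdot> ((Fs f \<cdot> Fs g) \<otimes> idm (dm f)) = ev (dm f) \<cdot> ((Fs f \<otimes> idm (dm f)) \<cdot> (Fs g \<otimes> idm (dm f)))"
    by (simp add: interchange)
  also have "\<dots> = ev (cd f) \<cdot> ((idm (dual (cd f)) \<otimes> f) \<cdot> (Fs g \<otimes> idm (dm f)))" by (simp add: tl2[OF 1])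
  also have "\<dots> = ev (cd g) \<cdot> ((idm (dual (cd g)) \<otimes> g) \<cdot> (idm (dual (cd g)) \<otimes> f))"
    by (simp add: 3 tl2[OF 2])
  also have "\<dots> = ev (cd (g \<cdot> f)) \<cdot> (idm (dual (cd (g \<cdot> f))) \<otimes> (g \<cdot> f))" by (simp add: interchange)
  finally show "ev (dm (g \<cdot> f)) \<cdot> ((Fs f \<cdot> Fs g) \<otimes> idm (dm (g \<cdot> f))) = ev (cd (g \<cdot> f)) \<cdot> (idm (dual (cd (g \<cdot> f))) \<otimes> (g \<cdot> f))"
    by simp
qed (use assms in auto)

lemma coev_nat: assumes "arr f"
  shows "(f \<otimes> idm (dual (dm f))) \<cdot> coev (dm f) = (idm (cd f) \<otimes> Fs f) \<cdot> coev (cd f)"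
proof -
  note [simp] = assms
  define a b where "a = dm f" and "b = cd f"
  have [simp]: "a \<in> Ob" "b \<in> Ob" "dm f = a" "cd f = b" unfolding a_def b_def by auto
  have I1: "idm b \<otimes> (ev b \<cdot> (idm (dual b) \<otimes> f)) = (idm b \<otimes> ev b) \<cdot> (idm b \<otimes> (idm (dual b) \<otimes> f))"
    by (simp add: interchange)
  have I2: "(idm b \<otimes> (idm (dual b) \<otimes> f)) \<cdot> as b (dual b) a = as b (dual b) b \<cdot> (idm (b \<odot> dual b) \<otimes> f)"
    using as_nat[of "idm b" "idm (dual b)" f] by simp
  have I3: "(idm (b \<odot> dual b) \<otimes> f) \<cdot> (coev b \<otimes> idm a) = (coev b \<otimes> idm b) \<cdot> (idm U \<otimes> f)"
    by (simp add: interchange)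
  have I4: "(idm U \<otimes> f) \<cdot> iv (lu a) = iv (lu b) \<cdot> f"
    by (rule flip[symmetric]) (use lu_nat[of f] in auto)
  have Ph: "Phi b (dual b) a (ev b \<cdot> (idm (dual b) \<otimes> f)) (coev b) = f"
  proof -
    have "Phi b (dual b) a (ev b \<cdot> (idm (dual b) \<otimes> f)) (coev b) = zz1e b (dual b) (ev b) (coev b) \<cdot> f"
      unfolding Phi_def zz1e_def I1 by (simp add: tl2[OF I2] tl2[OF I3] I4)
    then show ?thesis by simp
  qed
  have "(idm b \<otimes> Fs f) \<cdot> coev b = (Phi b (dual b) a (ev b \<cdot> (idm (dual b) \<otimes> f)) (coev b) \<otimes> idm (dual a)) \<cdot> coev a"
  proof -
    have "Fs f = Tr a (dual a) (coev a) (dual b) (ev b \<cdot> (idm (dual b) \<otimes> f))" unfolding Fs_def by simp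
    then show ?thesis by (simp only:) (rule G[where ev="ev a"], auto)
  qed
  then show ?thesis using Ph by simp
qed


lemma NAT: assumes "arr f" shows "Fs (D f) \<cdot> P (dm f) = P (cd f) \<cdot> D (Fs f)"
proof -
  define a b where "a = dm f" and "b = cd f"
  have [simp]: "arr f" "a \<in> Ob" "b \<in> Ob" "dm f = a" "cd f = b" unfolding a_def b_def using assms by auto
  define X1 where "X1 = Fs (D f) \<cdot> P a"
  define X2 where "X2 = P b \<cdot> D (Fs f)"
  have X1: "arr X1" "dm X1 = Do (dual a)" "cd X1 = dual (Do b)" unfolding X1_def by auto
  have X2: "arr X2" "dm X2 = Do (dual a)" "cd X2 = dual (Do b)" unfolding X2_def by auto
  define K where "K = ep \<cdot> (D (coev a) \<cdot> (D (f \<otimes> idm (dual a)) \<cdot> (iv (mu b (dual a)) \<cdot> br (Do (dual a)) (Do b))))"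
  have FE: "ev (Do b) \<cdot> (Fs (D f) \<otimes> idm (Do b)) = ev (Do a) \<cdot> (idm (dual (Do a)) \<otimes> D f)"
    using Fs_ev[of "D f"] by simp
  have I1: "(idm (dual (Do a)) \<otimes> D f) \<cdot> (P a \<otimes> idm (Do b)) = (P a \<otimes> idm (Do a)) \<cdot> (idm (Do (dual a)) \<otimes> D f)"
    by (simp add: interchange)
  have PE: "ev (Do a) \<cdot> (P a \<otimes> idm (Do a)) = dev a" by (simp add: P_ev)
  have B1: "br (Do (dual a)) (Do a) \<cdot> (idm (Do (dual a)) \<otimes> D f) = (D f \<otimes> idm (Do (dual a))) \<cdot> br (Do (dual a)) (Do b)"
    using br_nat[of "idm (Do (dual a))" "D f"] by simp
  have M1: "iv (mu a (dual a)) \<cdot> (D f \<otimes> idm (Do (dual a))) = D (f \<otimes> idm (dual a)) \<cdot> iv (mu b (dual a))"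
    using mu_nat_iv[of f "idm (dual a)"] by simp
  have L: "ev (Do b) \<cdot> (X1 \<otimes> idm (Do b)) = K"
  proof -
    have "ev (Do b) \<cdot> (X1 \<otimes> idm (Do b)) = ev (Do b) \<cdot> ((Fs (D f) \<otimes> idm (Do b)) \<cdot> (P a \<otimes> idm (Do b)))"
      unfolding X1_def by (simp add: interchange)
    also have "\<dots> = dev a \<cdot> (idm (Do (dual a)) \<otimes> D f)"
      by (simp add: tl2[OF FE] I1 tl2[OF PE])
    also have "\<dots> = K" unfolding K_def by (simp add: dev_eq e1_def B1 tl2[OF B1] tl2[OF M1])
    finally show ?thesis .
  qed
  have FE2: "ev (Do b) \<cdot> (P b \<otimes> idm (Do b)) = dev b" by (simp add: P_ev)
  have I2: "(P b \<cdot> D (Fs f)) \<otimes> idm (Do b) = (P b \<otimes> idm (Do b)) \<cdot> (D (Fs f) \<otimes> idm (Do b))"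
    by (simp add: interchange)
  have B2: "br (Do (dual b)) (Do b) \<cdot> (D (Fs f) \<otimes> idm (Do b)) = (idm (Do b) \<otimes> D (Fs f)) \<cdot> br (Do (dual a)) (Do b)"
    using br_nat[of "D (Fs f)" "idm (Do b)"] by simp
  have M2: "iv (mu b (dual b)) \<cdot> (idm (Do b) \<otimes> D (Fs f)) = D (idm b \<otimes> Fs f) \<cdot> iv (mu b (dual a))"
    using mu_nat_iv[of "idm b" "Fs f"] by simp
  have CN: "D (coev b) \<cdot> D (idm b \<otimes> Fs f) = D (coev a) \<cdot> D (f \<otimes> idm (dual a))"
  proof -
    have "D (coev b) \<cdot> D (idm b \<otimes> Fs f) = D ((idm b \<otimes> Fs f) \<cdot> coev b)" by (simp add: D_comp)
    also have "\<dots> = D ((f \<otimes> idm (dual a)) \<cdot> coev a)" using coev_nat[of f] by simp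
    also have "\<dots> = D (coev a) \<cdot> D (f \<otimes> idm (dual a))" by (simp add: D_comp)
    finally show ?thesis .
  qed
  have R: "ev (Do b) \<cdot> (X2 \<otimes> idm (Do b)) = K"
  proof -
    have "ev (Do b) \<cdot> (X2 \<otimes> idm (Do b)) = dev b \<cdot> (D (Fs f) \<otimes> idm (Do b))"
      unfolding X2_def I2 by (simp add: tl2[OF FE2])
    also have "\<dots> = ep \<cdot> (D (coev b) \<cdot> (D (idm b \<otimes> Fs f) \<cdot> (iv (mu b (dual a)) \<cdot> br (Do (dual a)) (Do b))))"
      by (simp add: dev_eq e1_def B2 tl2[OF B2] tl2[OF M2])
    also have "\<dots> = K" unfolding K_def by (simp add: tl2[OF CN])
    finally show ?thesis .
  qed
  have "X1 = Tr (Do b) (dual (Do b)) (coev (Do b)) (dm X1) (ev (Do b) \<cdot> (X1 \<otimes> idm (Do b)))"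
    by (rule TE[symmetric]) (use X1 in auto)
  also have "\<dots> = Tr (Do b) (dual (Do b)) (coev (Do b)) (dm X2) (ev (Do b) \<cdot> (X2 \<otimes> idm (Do b)))"
    using L R X1 X2 by simp
  also have "\<dots> = X2" by (rule TE) (use X2 in auto)
  finally show ?thesis unfolding X1_def X2_def by simp
qed


lemma ETA: assumes "a \<in> Ob" shows "Fs (eta a) \<cdot> P (Do a) = iv (eta (dual a)) \<cdot> D (P a)"
proof -
  note [simp] = assms
  define X1 where "X1 = Fs (eta a) \<cdot> P (Do a)"
  define X2 where "X2 = iv (eta (dual a)) \<cdot> D (P a)"
  have X1: "arr X1" "dm X1 = Do (dual (Do a))" "cd X1 = dual a" unfolding X1_def by auto
  have X2: "arr X2" "dm X2 = Do (dual (Do a))" "cd X2 = dual a" unfolding X2_def by auto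
  define W where "W = dev (Do a) \<cdot> (idm (Do (dual (Do a))) \<otimes> eta a)"
  have FE: "ev a \<cdot> (Fs (eta a) \<otimes> idm a) = ev (Do (Do a)) \<cdot> (idm (dual (Do (Do a))) \<otimes> eta a)"
    using Fs_ev[of "eta a"] by simp
  have I1: "(idm (dual (Do (Do a))) \<otimes> eta a) \<cdot> (P (Do a) \<otimes> idm a) = (P (Do a) \<otimes> idm (Do (Do a))) \<cdot> (idm (Do (dual (Do a))) \<otimes> eta a)"
    by (simp add: interchange)
  have PE: "ev (Do (Do a)) \<cdot> (P (Do a) \<otimes> idm (Do (Do a))) = dev (Do a)" by (simp add: P_ev)
  have L: "ev a \<cdot> (X1 \<otimes> idm a) = W"
  proof -
    have "ev a \<cdot> (X1 \<otimes> idm a) = ev a \<cdot> ((Fs (eta a) \<otimes> idm a) \<cdot> (P (Do a) \<otimes> idm a))"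
      unfolding X1_def by (simp add: interchange)
    also have "\<dots> = W" unfolding W_def by (simp add: tl2[OF FE] I1 tl2[OF PE])
    finally show ?thesis .
  qed
  have R1: "X2 \<otimes> idm a = (iv (eta (dual a)) \<otimes> iv (eta a)) \<cdot> (D (P a) \<otimes> eta a)"
    unfolding X2_def by (simp add: interchange)
  have R2: "ev a \<cdot> (iv (eta (dual a)) \<otimes> iv (eta a)) = ep \<cdot> (D (c1 a) \<cdot> iv (mu (Do (dual a)) (Do a)))"
  proof -
    have en: "eta U \<cdot> ev a = D (D (ev a)) \<cdot> eta (dual a \<odot> a)" using eta_nat[of "ev a"] by simp
    have e1: "ev a = iv (eta U) \<cdot> (D (D (ev a)) \<cdot> eta (dual a \<odot> a))"
      by (rule lsolve) (use en in auto)
    have e2: "iv (eta U) = ep \<cdot> D (iv ep)" unfolding eta_U by (simp add: iv_comp iv_D)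
    have e3: "eta (dual a \<odot> a) = D (mu (dual a) a) \<cdot> (iv (mu (Do (dual a)) (Do a)) \<cdot> (eta (dual a) \<otimes> eta a))"
      using eta_tens[of "dual a" a] by simp
    have e4: "(eta (dual a) \<otimes> eta a) \<cdot> (iv (eta (dual a)) \<otimes> iv (eta a)) = idm (Do (Do (dual a)) \<odot> Do (Do a))"
      by (simp add: interchange)
    have "ev a \<cdot> (iv (eta (dual a)) \<otimes> iv (eta a)) = ep \<cdot> (D (iv ep) \<cdot> (D (D (ev a)) \<cdot> (D (mu (dual a) a) \<cdot> iv (mu (Do (dual a)) (Do a)))))"
      apply (subst e1)
      apply (simp add: e2 e3 e4 tl2[OF e4])
      done
    also have "\<dots> = ep \<cdot> (D (c1 a) \<cdot> iv (mu (Do (dual a)) (Do a)))"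
      unfolding c1_def by (simp add: D_comp)
    finally show ?thesis .
  qed
  have R3: "iv (mu (Do (dual a)) (Do a)) \<cdot> (D (P a) \<otimes> eta a) = D (P a \<otimes> idm (Do a)) \<cdot> (iv (mu (dual (Do a)) (Do a)) \<cdot> (idm (Do (dual (Do a))) \<otimes> eta a))"
  proof -
    have m: "D (P a \<otimes> idm (Do a)) \<cdot> iv (mu (dual (Do a)) (Do a)) = iv (mu (Do (dual a)) (Do a)) \<cdot> (D (P a) \<otimes> idm (Do (Do a)))"
      using mu_nat_iv[of "P a" "idm (Do a)"] by simp
    have i: "D (P a) \<otimes> eta a = (D (P a) \<otimes> idm (Do (Do a))) \<cdot> (idm (Do (dual (Do a))) \<otimes> eta a)"
      by (simp add: interchange)
    have m': "iv (mu (Do (dual a)) (Do a)) \<cdot> (D (P a) \<otimes> idm (Do (Do a))) = D (P a \<otimes> idm (Do a)) \<cdot> iv (mu (dual (Do a)) (Do a))"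
      using m by simp
    show ?thesis unfolding i by (simp add: tl2[OF m'])
  qed
  have R4: "(P a \<otimes> idm (Do a)) \<cdot> c1 a = br (Do a) (dual (Do a)) \<cdot> coev (Do a)"
  proof -
    have c: "c1 a = br (Do a) (Do (dual a)) \<cdot> dcoev a" by (simp add: dcoev_eq)
    have b: "(P a \<otimes> idm (Do a)) \<cdot> br (Do a) (Do (dual a)) = br (Do a) (dual (Do a)) \<cdot> (idm (Do a) \<otimes> P a)"
      using br_nat[of "idm (Do a)" "P a"] by simp
    show ?thesis unfolding c by (simp add: tl2[OF b] P_coev)
  qed
  have R5: "D (br (Do a) (dual (Do a))) \<cdot> iv (mu (dual (Do a)) (Do a)) = iv (mu (Do a) (dual (Do a))) \<cdot> br (Do (dual (Do a))) (Do (Do a))"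
    by (rule flip[symmetric]) (use mu_br[of "Do a" "dual (Do a)"] in auto)
  have R: "ev a \<cdot> (X2 \<otimes> idm a) = W"
  proof -
    have "ev a \<cdot> (X2 \<otimes> idm a) = ep \<cdot> (D (c1 a) \<cdot> (D (P a \<otimes> idm (Do a)) \<cdot> (iv (mu (dual (Do a)) (Do a)) \<cdot> (idm (Do (dual (Do a))) \<otimes> eta a))))"
      unfolding R1 by (simp add: tl2[OF R2] R3)
    also have "\<dots> = ep \<cdot> (D ((P a \<otimes> idm (Do a)) \<cdot> c1 a) \<cdot> (iv (mu (dual (Do a)) (Do a)) \<cdot> (idm (Do (dual (Do a))) \<otimes> eta a)))"
      by (simp add: D_comp)
    also have "\<dots> = ep \<cdot> (D (coev (Do a)) \<cdot> (D (br (Do a) (dual (Do a))) \<cdot> (iv (mu (dual (Do a)) (Do a)) \<cdot> (idm (Do (dual (Do a))) \<otimes> eta a))))"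
      unfolding R4 by (simp add: D_comp)
    also have "\<dots> = W" unfolding W_def d_ev_def by (simp add: tl2[OF R5])
    finally show ?thesis .
  qed
  have "X1 = Tr a (dual a) (coev a) (dm X1) (ev a \<cdot> (X1 \<otimes> idm a))"
    by (rule TE[symmetric]) (use X1 in auto)
  also have "\<dots> = Tr a (dual a) (coev a) (dm X2) (ev a \<cdot> (X2 \<otimes> idm a))"
    using L R X1 X2 by simp
  also have "\<dots> = X2" by (rule TE) (use X2 in auto)
  finally show ?thesis unfolding X1_def X2_def by simp
qed


lemma main: "anti_involutive_functor C d0 d1 eta (mc_op C) d0 d1 (\<lambda>a. iv (eta a))
           dual (dual_mor C dual ev) (canon_iso C d0 d1 dmu deps dual ev coev)"
  unfolding anti_involutive_functor_def
proof (intro conjI ballI)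
  show "mc_functor C (mc_op C) dual (dual_mor C dual ev)"
    unfolding mc_functor_def
    by (auto simp: dual_mor_eq Fs_id Fs_comp mc_hom_def)
next
  fix a assume a: "a \<in> mc_obj C"
  show "phi a \<in> mc_hom (mc_op C) (dual (Do a)) (Do (dual a))" using a by (auto simp: phi_eq mc_hom_def)
  show "mc_iso (mc_op C) (phi a)" using a by (simp add: phi_eq P_iso)
next
  fix f assume f: "f \<in> mc_arr C"
  show "mc_cmp (mc_op C) (phi (dm f)) (dual_mor C dual ev (D f)) = mc_cmp (mc_op C) (D (dual_mor C dual ev f)) (phi (cd f))"
    using f by (simp add: phi_eq dual_mor_eq NAT)
next
  fix a assume a: "a \<in> mc_obj C"
  show "mc_cmp (mc_op C) (phi (Do a)) (dual_mor C dual ev (eta a)) = mc_cmp (mc_op C) (D (phi a)) (iv (eta (dual a)))"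
    using a by (simp add: phi_eq dual_mor_eq ETA)
qed

end

theorem mainTheorem11:
  fixes C :: "('o, 'm, 'x) mcat_scheme"
    and d0 :: "'o \<Rightarrow> 'o" and d1 :: "'m \<Rightarrow> 'm"
    and dmu :: "'o \<Rightarrow> 'o \<Rightarrow> 'm" and deps :: "'m" and eta :: "'o \<Rightarrow> 'm"
    and dual :: "'o \<Rightarrow> 'o" and ev coev :: "'o \<Rightarrow> 'm"
  assumes "anti_involutive_category C d0 d1 dmu deps eta"
    and "dual_choice C dual ev coev"
  shows "anti_involutive_functor
           C d0 d1 eta
           (mc_op C) d0 d1 (\<lambda>a. mc_inv C (eta a))
           dual (dual_mor C dual ev) (canon_iso C d0 d1 dmu deps dual ev coev)"
proof -
  have "aicd C d0 d1 dmu deps eta dual ev coev"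
    unfolding aicd_def aicd_axioms_def aic_def aic_axioms_def smc_def
    using assms unfolding anti_involutive_category_def by auto
  then show ?thesis by (rule aicd.main)
qed

end
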